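(* Let $n\ge1$, $m \ge 1$ be integers and $\lambda > 1$, $\sigma > 1$ real numbers, and let $a_\alpha$, $a$, $b$ be as in the context. There is a constant $C > 0$ depending only on $n, m, \lambda, \sigma$ such that for every solution $u$ of the inequality $\sum_{|\alpha| = m} (-1)^m \partial^\alpha a_\alpha(x, u) \ge b(x) |u|^\lambda$ in $\mathbb{R}^n$ and all real numbers $0 < r_1 < r_2$ with $r_2 \le \sqrt{\sigma}\, r_1$, $$J(r_2) - J(r_1) \ge C (r_2 - r_1)^{\lambda m} r_1^{(1-\lambda) n} \sup_{(r_1, r_2)} h \; J^\lambda(r_1),$$ where $J$ and $h$ are defined in the context.
   Context: For each multi-index $\alpha$ with $|\alpha| = m$, $a_\alpha : \mathbb{R}^n \times \mathbb{R} \to \mathbb{R}$ is a given function and $\partial^\alpha = \partial^{|\alpha|}/\partial x_1^{\alpha_1}\cdots\partial x_n^{\alpha_n}$. The function $b : \mathbb{R}^n \to (0,\infty)$ is positive measurable, and $a : \mathbb{R}^n \to (0,\infty)$ is positive measurable with $|a_\alpha(x,\zeta)| \le a(x)|\zeta|$ for almost all $x$, all $\zeta \in \mathbb{R}$, all $|\alpha|=m$. $B_r$ is the open ball of radius $r$ centered at $0$ in $\mathbb{R}^n$. A solution is a function $u$ with $b|u|^\lambda \in L_{1,loc}(\mathbb{R}^n)$, $a_\alpha(x,u) \in L_{1,loc}(\mathbb{R}^n)$ for all $|\alpha|=m$, and $\int_{\mathbb{R}^n} \sum_{|\alpha|=m} a_\alpha(x,u)\partial^\alpha\varphi\,dx \ge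 \int_{\mathbb{R}^n} b|u|^\lambda \varphi\,dx$ for all non-negative $\varphi \in C_0^\infty(\mathbb{R}^n)$. For $r>0$: $J(r) = \int_{B_r} b(x)|u|^\lambda\,dx$ and $$h(r) = \left( \frac{1}{r^n} \int_{B_{\sqrt{\sigma} r} \setminus B_{r/\sqrt{\sigma}}} a^{\lambda/(\lambda-1)}(x) b^{-1/(\lambda-1)}(x)\,dx \right)^{1-\lambda},$$ with $h(r) = 0$ if the integral equals $\infty$. *)

theory Defs
  imports "HOL-Analysis.Analysis"
begin

text \<open>Points of R^n are vectors of type real^'n (n = CARD('n)).
  A multi-index is a function 'n \<Rightarrow> nat; its order is the sum of its entries.\<close>

definition mi_order :: "('n::finite \<Rightarrow> nat) \<Rightarrow> nat" where
  "mi_order \<alpha> = (\<Sum>i\<in>UNIV. \<alpha> i)"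

definition partial_dir :: "'n::finite \<Rightarrow> (real^'n \<Rightarrow> real) \<Rightarrow> real^'n \<Rightarrow> real" where
  "partial_dir i f x = deriv (\<lambda>t. f (x + t *\<^sub>R axis i 1)) 0"

fun iter_partial :: "'n::finite list \<Rightarrow> (real^'n \<Rightarrow> real) \<Rightarrow> real^'n \<Rightarrow> real" where
  "iter_partial [] f = f"
| "iter_partial (i # is) f = partial_dir i (iter_partial is f)"

text \<open>The mixed partial derivative \<partial>^\<alpha>: differentiate \<alpha> i times in direction i
  (for smooth functions the order is irrelevant).\<close>
definition mpartial :: "('n::finite \<Rightarrow> nat) \<Rightarrow> (real^'n \<Rightarrow> real) \<Rightarrow> real^'n \<Rightarrow> real" where
  "mpartial \<alpha> f = iter_partial (SOME is. \<forall>i. count_list is i = \<alpha> i) f"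

definition smooth_fun :: "(real^'n::finite \<Rightarrow> real) \<Rightarrow> bool" where
  "smooth_fun f \<longleftrightarrow> (\<forall>is. continuous_on UNIV (iter_partial is f) \<and>
      (\<forall>i x. (\<lambda>t. iter_partial is f (x + t *\<^sub>R axis i 1)) differentiable (at 0)))"

definition test_fun :: "(real^'n::finite \<Rightarrow> real) \<Rightarrow> bool" where
  "test_fun f \<longleftrightarrow> smooth_fun f \<and> compact (closure {x. f x \<noteq> 0})"

definition loc_integrable :: "(real^'n::finite \<Rightarrow> real) \<Rightarrow> bool" where
  "loc_integrable f \<longleftrightarrow> (\<forall>K. compact K \<longrightarrow> set_integrable lborel K f)"

text \<open>Solutions of  \<Sum>_{|\<alpha>|=m} (-1)^m \<partial>^\<alpha> a_\<alpha>(x,u) \<ge> b |u|^lam  in the weak sense.\<close>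
definition is_solution ::
  "nat \<Rightarrow> real \<Rightarrow> (('n::finite \<Rightarrow> nat) \<Rightarrow> real^'n \<Rightarrow> real \<Rightarrow> real) \<Rightarrow> (real^'n \<Rightarrow> real)
     \<Rightarrow> (real^'n \<Rightarrow> real) \<Rightarrow> bool" where
  "is_solution m lam aa b u \<longleftrightarrow>
     loc_integrable (\<lambda>x. b x * \<bar>u x\<bar> powr lam) \<and>
     (\<forall>\<alpha>. mi_order \<alpha> = m \<longrightarrow> loc_integrable (\<lambda>x. aa \<alpha> x (u x))) \<and>
     (\<forall>\<phi>. test_fun \<phi> \<and> (\<forall>x. \<phi> x \<ge> 0) \<longrightarrow>
        (\<integral>x. (\<Sum>\<alpha>\<in>{\<alpha>. mi_order \<alpha> = m}. aa \<alpha> x (u x) * mpartial \<alpha> \<phi> x) \<partial>lborel)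
          \<ge> (\<integral>x. b x * \<bar>u x\<bar> powr lam * \<phi> x \<partial>lborel))"

definition J_fun :: "real \<Rightarrow> (real^'n::finite \<Rightarrow> real) \<Rightarrow> (real^'n \<Rightarrow> real) \<Rightarrow> real \<Rightarrow> real" where
  "J_fun lam b u r = (LINT x:ball 0 r|lborel. b x * \<bar>u x\<bar> powr lam)"

definition h_fun :: "real \<Rightarrow> real \<Rightarrow> (real^'n::finite \<Rightarrow> real) \<Rightarrow> (real^'n \<Rightarrow> real) \<Rightarrow> real \<Rightarrow> real" where
  "h_fun lam \<sigma> a b r =
     (let I = (\<integral>\<^sup>+ x \<in> ball 0 (sqrt \<sigma> * r) - ball 0 (r / sqrt \<sigma>).
                 ennreal (a x powr (lam / (lam - 1)) * b x powr (- 1 / (lam - 1))) \<partial>lborel)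
      in if I = \<infinity> then 0 else (enn2real I / r ^ CARD('n)) powr (1 - lam))"

end

theory Submission
  imports Defs "HOL-Computational_Algebra.Polynomial"
begin

definition Ep :: "real poly \<Rightarrow> real \<Rightarrow> real" where
  "Ep p t = (if t > 0 then poly p (1/t) * exp (-1/t) else 0)"

definition dE :: "real poly \<Rightarrow> real poly" where
  "dE p = [:0,0,1:] * (p - pderiv p)"

lemma poly_exp_at_top: "((\<lambda>y. poly q y * exp (-y)) \<longlongrightarrow> (0::real)) at_top"
proof -
  have e: "(\<lambda>y. poly q y * exp (-y)) = (\<lambda>y. \<Sum>i\<le>degree q. coeff q i * (y ^ i / exp y))"
    by (auto simp: poly_altdef sum_divide_distrib exp_minus field_simps)
  have "((\<lambda>y. \<Sum>i\<le>degree q. coeff q i * (y ^ i / exp y)) \<longlongrightarrow> (\<Sum>i\<le>degree q. coeff q i * 0)) at_top"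
    by (intro tendsto_intros tendsto_power_div_exp_0)
  then show ?thesis unfolding e by simp
qed

lemma poly_exp_at_right: "((\<lambda>t. poly q (1/t) * exp (-1/t)) \<longlongrightarrow> (0::real)) (at_right 0)"
proof -
  have "((\<lambda>t. poly q (inverse t) * exp (- inverse t)) \<longlongrightarrow> (0::real)) (at_right 0)"
    by (rule filterlim_compose[OF poly_exp_at_top filterlim_inverse_at_top_right])
  then show ?thesis by (simp add: divide_inverse)
qed

lemma Ep_deriv: "(Ep p has_real_derivative Ep (dE p) t) (at t)"
proof -
  consider "t = 0" | "t > 0" | "t < 0" by linarith
  then show ?thesis
  proof cases
    case 1
    have r: "((\<lambda>h. (Ep p h - Ep p 0) / (h - 0)) \<longlongrightarrow> 0) (at_right 0)"
    proof -
      have "((\<lambda>h. poly (pCons 0 p) (1/h) * exp (-1/h)) \<longlongrightarrow> 0) (at_right 0)"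
        by (rule poly_exp_at_right)
      moreover have "eventually (\<lambda>h. poly (pCons 0 p) (1/h) * exp (-1/h) = (Ep p h - Ep p 0) / (h - 0)) (at_right (0::real))"
        using eventually_at_right_less[of 0] by eventually_elim (simp add: Ep_def)
      ultimately show ?thesis by (rule Lim_transform_eventually)
    qed
    have l: "((\<lambda>h. (Ep p h - Ep p 0) / (h - 0)) \<longlongrightarrow> 0) (at_left 0)"
    proof -
      have "eventually (\<lambda>h. 0 = (Ep p h - Ep p 0) / (h - 0)) (at_left (0::real))"
        proof -
        have "eventually (\<lambda>x. x \<in> {-1<..<0}) (at_left (0::real))"
          by (rule eventually_at_left_real) simp
        then show ?thesis by eventually_elim (simp add: Ep_def)
      qed
      then show ?thesis by (rule Lim_transform_eventually[OF tendsto_const])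
    qed
    have "(Ep p has_real_derivative 0) (at 0)"
      unfolding has_field_derivative_iff by (rule filterlim_split_at[OF l r])
    moreover have "Ep (dE p) 0 = 0" by (simp add: Ep_def)
    ultimately show ?thesis using 1 by simp
  next
    case 2
    have d: "((\<lambda>t. poly p (1/t) * exp (-1/t)) has_real_derivative
        poly (pderiv p) (1/t) * (- 1 / t^2) * exp (-1/t) + poly p (1/t) * (exp (-1/t) * (1/t^2))) (at t)"
      using 2 by (auto intro!: derivative_eq_intros simp: power2_eq_square field_simps)
    have e: "poly (pderiv p) (1/t) * (- 1 / t^2) * exp (-1/t) + poly p (1/t) * (exp (-1/t) * (1/t^2))
        = Ep (dE p) t"
      using 2 by (simp add: Ep_def dE_def algebra_simps power2_eq_square divide_inverse)
    show ?thesis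
      by (rule has_field_derivative_transform_within_open[of _ _ _ "{0<..}"])
         (use d e 2 in \<open>auto simp: Ep_def\<close>)
  next
    case 3
    show ?thesis
      by (rule has_field_derivative_transform_within_open[of "\<lambda>_. 0" _ _ "{..<0}"])
         (use 3 in \<open>auto simp: Ep_def\<close>)
  qed
qed

inductive gen1 :: "(real \<Rightarrow> real) \<Rightarrow> bool" where
  g1_const: "gen1 (\<lambda>_. c)"
| g1_Ep: "gen1 (Ep p)"
| g1_aff: "gen1 f \<Longrightarrow> gen1 (\<lambda>t. f (a * t + b))"
| g1_add: "gen1 f \<Longrightarrow> gen1 g \<Longrightarrow> gen1 (\<lambda>t. f t + g t)"
| g1_mult: "gen1 f \<Longrightarrow> gen1 g \<Longrightarrow> gen1 (\<lambda>t. f t * g t)"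
| g1_inv: "gen1 f \<Longrightarrow> (\<forall>t. f t \<noteq> 0) \<Longrightarrow> gen1 (\<lambda>t. inverse (f t))"

lemma gen1_has_deriv: "gen1 f \<Longrightarrow> \<exists>f'. gen1 f' \<and> (\<forall>t. (f has_real_derivative f' t) (at t))"
proof (induction rule: gen1.induct)
  case (g1_const c)
  then show ?case by (intro exI[of _ "\<lambda>_. 0"]) (auto intro: gen1.intros)
next
  case (g1_Ep p)
  then show ?case by (intro exI[of _ "Ep (dE p)"]) (auto intro: gen1.intros Ep_deriv)
next
  case (g1_aff f a b)
  then obtain f' where f': "gen1 f'" "\<forall>t. (f has_real_derivative f' t) (at t)" by blast
  show ?case
  proof (intro exI[of _ "\<lambda>t. f' (a * t + b) * a"] conjI allI)
    show "gen1 (\<lambda>t. f' (a * t + b) * a)" by (intro gen1.intros f')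
    fix t
    have "((\<lambda>t. a * t + b) has_real_derivative a) (at t)"
      by (auto intro!: derivative_eq_intros)
    from DERIV_chain2[OF f'(2)[rule_format] this]
    show "((\<lambda>t. f (a * t + b)) has_real_derivative f' (a * t + b) * a) (at t)" .
  qed
next
  case (g1_add f g)
  then obtain f' g' where "gen1 f'" "\<forall>t. (f has_real_derivative f' t) (at t)"
     "gen1 g'" "\<forall>t. (g has_real_derivative g' t) (at t)" by blast
  then show ?case
    by (intro exI[of _ "\<lambda>t. f' t + g' t"]) (auto intro: gen1.intros DERIV_add)
next
  case (g1_mult f g)
  then obtain f' g' where "gen1 f'" "\<forall>t. (f has_real_derivative f' t) (at t)"
     "gen1 g'" "\<forall>t. (g has_real_derivative g' t) (at t)" by blast
  note h = this
  show ?case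
  proof (intro exI[of _ "\<lambda>t. f' t * g t + f t * g' t"] conjI allI)
    show "gen1 (\<lambda>t. f' t * g t + f t * g' t)" by (intro gen1.intros h g1_mult.hyps)
    fix t
    show "((\<lambda>t. f t * g t) has_real_derivative f' t * g t + f t * g' t) (at t)"
      using DERIV_mult'[of f "f' t" t UNIV g "g' t"] h by (simp add: algebra_simps)
  qed
next
  case (g1_inv f)
  then obtain f' where f': "gen1 f'" "\<forall>t. (f has_real_derivative f' t) (at t)" by blast
  show ?case
  proof (intro exI[of _ "\<lambda>t. - (f' t * (inverse (f t) * inverse (f t)))"] conjI allI)
    have m1: "gen1 (\<lambda>_. -1)" by (rule gen1.intros)
    have "gen1 (\<lambda>t. (-1) * (f' t * (inverse (f t) * inverse (f t))))"
      by (intro gen1.intros m1 f' g1_inv)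
    then show "gen1 (\<lambda>t. - (f' t * (inverse (f t) * inverse (f t))))" by simp
    fix t
    show "((\<lambda>t. inverse (f t)) has_real_derivative - (f' t * (inverse (f t) * inverse (f t)))) (at t)"
      using DERIV_inverse_fun[OF f'(2)[rule_format, of t]] g1_inv(2)
      by (simp add: power2_eq_square)
  qed
qed

lemma gen1_deriv: "gen1 f \<Longrightarrow> gen1 (deriv f) \<and> (\<forall>t. (f has_real_derivative deriv f t) (at t))"
proof -
  assume "gen1 f"
  then obtain f' where f': "gen1 f'" "\<forall>t. (f has_real_derivative f' t) (at t)"
    using gen1_has_deriv by blast
  then have "deriv f = f'" by (auto intro!: DERIV_imp_deriv)
  then show ?thesis using f' by simp
qed

lemma gen1_iter_deriv: "gen1 f \<Longrightarrow> gen1 ((deriv ^^ j) f)"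
  by (induction j) (auto dest: gen1_deriv)

lemma gen1_iter_has_deriv: "gen1 f \<Longrightarrow> ((deriv ^^ j) f has_real_derivative (deriv ^^ Suc j) f t) (at t)"
  using gen1_deriv[OF gen1_iter_deriv] by auto

lemma gen1_cont: "gen1 f \<Longrightarrow> continuous_on UNIV f"
  using gen1_deriv by (meson DERIV_isCont continuous_at_imp_continuous_on)

lemma gen1_power: "gen1 f \<Longrightarrow> gen1 (\<lambda>t. f t ^ k)"
proof (induction k)
  case 0
  then show ?case using g1_const[of 1] by simp
next
  case (Suc k)
  then show ?case using g1_mult[OF Suc.prems Suc.IH] by (simp add: mult.commute)
qed

definition H :: "real \<Rightarrow> real" where
  "H z = Ep 1 (1 - z) * inverse (Ep 1 (1 - z) + Ep 1 z)"

lemma Ep1_pos: "t > 0 \<Longrightarrow> Ep 1 t > 0" and Ep1_zero: "t \<le> 0 \<Longrightarrow> Ep 1 t = 0"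
  by (auto simp: Ep_def)

lemma Ep1_nonneg: "Ep 1 t \<ge> 0"
  by (auto simp: Ep_def)

lemma H_den_pos: "Ep 1 (1 - z) + Ep 1 z > 0"
proof (cases "z > 0")
  case True then show ?thesis using Ep1_pos[of z] Ep1_nonneg[of "1-z"] by linarith
next
  case False then show ?thesis using Ep1_pos[of "1-z"] Ep1_nonneg[of z] by linarith
qed

lemma gen1_H: "gen1 H"
proof -
  have a: "gen1 (\<lambda>z. Ep 1 ((-1) * z + 1))" by (intro gen1.intros)
  have b: "gen1 (\<lambda>z. Ep 1 (1 * z + 0))" by (intro gen1.intros)
  have "gen1 (\<lambda>z. Ep 1 ((-1) * z + 1) * inverse (Ep 1 ((-1) * z + 1) + Ep 1 (1 * z + 0)))"
  proof (intro gen1.intros a b allI)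
    fix t
    show "Ep 1 ((-1) * t + 1) + Ep 1 (1 * t + 0) \<noteq> 0" using H_den_pos[of t] by simp
  qed
  then show ?thesis unfolding H_def by simp
qed

lemma H_ge0: "H z \<ge> 0" and H_le1: "H z \<le> 1"
  using H_den_pos[of z] Ep1_nonneg[of z] Ep1_nonneg[of "1-z"]
  by (auto simp: H_def field_simps)

lemma H_left: "z \<le> 0 \<Longrightarrow> H z = 1"
  using H_den_pos[of z] by (auto simp: H_def Ep1_zero)

lemma H_right: "z \<ge> 1 \<Longrightarrow> H z = 0"
  by (auto simp: H_def Ep1_zero)

definition G :: "nat \<Rightarrow> real \<Rightarrow> real" where
  "G N z = H z ^ N"

lemma gen1_G: "gen1 (G N)"
  unfolding G_def by (rule gen1_power[OF gen1_H])

lemma G_ge0: "G N z \<ge> 0" and G_le1: "G N z \<le> 1"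
  using H_ge0[of z] H_le1[of z] by (auto simp: G_def power_le_one)

lemma G_left: "z \<le> 0 \<Longrightarrow> G N z = 1" and G_right: "z \<ge> 1 \<Longrightarrow> N > 0 \<Longrightarrow> G N z = 0"
  by (auto simp: G_def H_left H_right)

lemma loc_const_deriv0:
  assumes "(g has_real_derivative d) (at z)" "open U" "z \<in> U" "\<And>w. w \<in> U \<Longrightarrow> g w = c"
  shows "d = 0"
proof -
  have "((\<lambda>_. c) has_real_derivative 0) (at z)" by simp
  then have "(g has_real_derivative 0) (at z)"
    by (rule has_field_derivative_transform_within_open[OF _ assms(2,3)]) (use assms(4) in auto)
  then show ?thesis using assms(1) DERIV_unique by blast
qed

lemma gen1_loc_const_iter:
  assumes "gen1 f" "open U" "\<And>w. w \<in> U \<Longrightarrow> f w = c"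
  shows "z \<in> U \<Longrightarrow> (deriv ^^ Suc j) f z = 0"
proof (induction j arbitrary: z)
  case 0
  show ?case using loc_const_deriv0[OF gen1_iter_has_deriv[OF assms(1), of 0 z, simplified] assms(2) 0 assms(3)] by simp
next
  case (Suc j)
  show ?case
    using loc_const_deriv0[OF gen1_iter_has_deriv[OF assms(1), of "Suc j" z] assms(2) Suc.prems Suc.IH]
    by simp
qed

lemma G_deriv_out:
  assumes "j \<ge> 1" "N > 0" "z < 0 \<or> z > 1"
  shows "(deriv ^^ j) (G N) z = 0"
proof -
  obtain j' where j: "j = Suc j'" using assms(1) by (cases j) auto
  show ?thesis
  proof (cases "z < 0")
    case True
    show ?thesis unfolding j
      by (rule gen1_loc_const_iter[OF gen1_G, where U="{..<0}" and c=1]) (use True G_left in auto)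
  next
    case False
    then have "z > 1" using assms(3) by auto
    show ?thesis unfolding j
      by (rule gen1_loc_const_iter[OF gen1_G, where U="{1<..}" and c=0]) (use \<open>z > 1\<close> G_right assms(2) in auto)
  qed
qed

lemma G_deriv_repr:
  "j \<le> N \<Longrightarrow> \<exists>R. gen1 R \<and> (\<forall>z. (deriv ^^ j) (G N) z = H z ^ (N - j) * R z)"
proof (induction j)
  case 0
  then show ?case by (intro exI[of _ "\<lambda>_. 1"]) (auto simp: G_def intro: gen1.intros)
next
  case (Suc j)
  then obtain R where R: "gen1 R" "\<And>z. (deriv ^^ j) (G N) z = H z ^ (N - j) * R z" by auto
  define R' where "R' = (\<lambda>z. of_nat (N - j) * deriv H z * R z + H z * deriv R z)"
  have gR': "gen1 R'" unfolding R'_def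
    by (intro gen1.intros R gen1_H gen1_deriv[THEN conjunct1])
  have eq: "(deriv ^^ j) (G N) = (\<lambda>z. H z ^ (N - j) * R z)" using R(2) by auto
  have Nj: "N - j = Suc (N - Suc j)" using Suc.prems by simp
  show ?case
  proof (intro exI[of _ R'] conjI allI gR')
    fix z
    have dH: "(H has_real_derivative deriv H z) (at z)" using gen1_deriv[OF gen1_H] by auto
    have dR: "(R has_real_derivative deriv R z) (at z)" using gen1_deriv[OF R(1)] by auto
    have dp: "((\<lambda>z. H z ^ (N - j)) has_real_derivative of_nat (N - j) * H z ^ (N - j - 1) * deriv H z) (at z)"
      using DERIV_power[OF dH, of "N - j"] by (simp add: algebra_simps)
    have "((\<lambda>z. H z ^ (N - j) * R z) has_real_derivative
        (of_nat (N - j) * H z ^ (N - j - 1) * deriv H z) * R z + H z ^ (N - j) * deriv R z) (at z)"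
      using DERIV_mult'[OF dp dR] by (simp add: algebra_simps)
    then have "deriv (\<lambda>z. H z ^ (N - j) * R z) z
        = (of_nat (N - j) * H z ^ (N - j - 1) * deriv H z) * R z + H z ^ (N - j) * deriv R z"
      by (rule DERIV_imp_deriv)
    also have "\<dots> = H z ^ (N - Suc j) * R' z"
      unfolding R'_def Nj by (simp add: algebra_simps)
    finally show "(deriv ^^ Suc j) (G N) z = H z ^ (N - Suc j) * R' z"
      using eq by simp
  qed
qed

lemma H_pow_le:
  assumes "real k \<ge> e" "e > 0"
  shows "H z ^ k \<le> H z powr e"
proof (cases "H z = 0")
  case True
  have "k > 0" using assms by auto
  then show ?thesis using True by (simp add: zero_power)
next
  case False
  then have Hp: "H z > 0" using H_ge0[of z] by linarith
  have "H z ^ k = H z powr real k" using powr_realpow[OF Hp] by simp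
  also have "\<dots> \<le> H z powr e" by (rule powr_mono'[OF assms(1) H_ge0 H_le1])
  finally show ?thesis .
qed

lemma G_powr: "lam > 0 \<Longrightarrow> N > 0 \<Longrightarrow> G N z powr (1/lam) = H z powr (real N / lam)"
proof (cases "H z = 0")
  case True
  assume "N > 0"
  then show ?thesis using True by (simp add: G_def zero_power)
next
  case False
  assume "lam > 0"
  then have Hp: "H z > 0" using H_ge0[of z] False by linarith
  have "G N z = H z powr real N" using powr_realpow[OF Hp] by (simp add: G_def)
  then show ?thesis by (simp add: powr_powr)
qed

lemma G_deriv_bound:
  assumes "j \<le> m" "m \<le> N" "real N - real m \<ge> real N / lam" "lam > 1" "N > 0"
  shows "\<exists>L. \<forall>z. \<bar>(deriv ^^ j) (G N) z\<bar> \<le> L * G N z powr (1/lam)"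
proof (cases "j = 0")
  case True
  show ?thesis
  proof (intro exI[of _ 1] allI)
    fix z
    have "G N z powr 1 \<le> G N z powr (1/lam)"
      by (rule powr_mono'[OF _ G_ge0 G_le1]) (use assms in auto)
    then show "\<bar>(deriv ^^ j) (G N) z\<bar> \<le> 1 * G N z powr (1 / lam)"
      using True G_ge0[of N z] by simp
  qed
next
  case False
  have jN: "j \<le> N" using assms by simp
  obtain R where R: "gen1 R" "\<And>z. (deriv ^^ j) (G N) z = H z ^ (N - j) * R z"
    using G_deriv_repr[OF jN] by auto
  have "compact (R ` {0..1})"
    by (rule compact_continuous_image[OF continuous_on_subset[OF gen1_cont[OF R(1)]]]) auto
  then obtain B where B: "\<And>z. z \<in> {0..1} \<Longrightarrow> \<bar>R z\<bar> \<le> B"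
    using compact_imp_bounded bounded_real by (metis image_eqI)
  have lam0: "lam > 0" using assms by simp
  have e: "real (N - j) \<ge> real N / lam" using assms by simp
  have e0: "real N / lam > 0" using assms by simp
  show ?thesis
  proof (intro exI[of _ "\<bar>B\<bar>"] allI)
    fix z
    show "\<bar>(deriv ^^ j) (G N) z\<bar> \<le> \<bar>B\<bar> * G N z powr (1 / lam)"
    proof (cases "z \<in> {0..1}")
      case True
      have "\<bar>(deriv ^^ j) (G N) z\<bar> = H z ^ (N - j) * \<bar>R z\<bar>"
        using R(2)[of z] H_ge0[of z] by (simp add: abs_mult)
      also have "\<dots> \<le> H z powr (real N / lam) * \<bar>B\<bar>"
        by (intro mult_mono H_pow_le e e0) (use B[OF True] in auto)
      finally show ?thesis using G_powr[OF lam0 assms(5)] by (simp add: mult.commute)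
    next
      case False
      then have "(deriv ^^ j) (G N) z = 0"
        using G_deriv_out[of j N z] \<open>j \<noteq> 0\<close> assms by auto
      then show ?thesis by simp
    qed
  qed
qed

inductive genn :: "(real^'n::finite \<Rightarrow> real) \<Rightarrow> bool" where
  gn_const: "genn (\<lambda>_. c)"
| gn_coord: "genn (\<lambda>x. x $ k)"
| gn_inner: "genn (\<lambda>x. x \<bullet> x)"
| gn_add: "genn f \<Longrightarrow> genn g \<Longrightarrow> genn (\<lambda>x. f x + g x)"
| gn_mult: "genn f \<Longrightarrow> genn g \<Longrightarrow> genn (\<lambda>x. f x * g x)"
| gn_comp: "gen1 g \<Longrightarrow> genn f \<Longrightarrow> genn (\<lambda>x. g (f x))"

lemma genn_cont: "genn f \<Longrightarrow> continuous_on UNIV f"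
proof (induction rule: genn.induct)
  case (gn_comp g f)
  then show ?case using continuous_on_compose2[OF gen1_cont[OF gn_comp(1)] gn_comp(3)] by auto
qed (auto intro!: continuous_intros)

lemma line_inner_deriv:
  "((\<lambda>t. (x + t *\<^sub>R axis i 1) \<bullet> (x + t *\<^sub>R axis i (1::real))) has_real_derivative 2 * x $ i) (at 0)"
proof -
  have e: "(\<lambda>t. (x + t *\<^sub>R axis i 1) \<bullet> (x + t *\<^sub>R axis i (1::real))) = (\<lambda>t. x \<bullet> x + 2 * t * x $ i + t * t)"
    by (auto simp: inner_add_left inner_add_right inner_axis inner_axis' inner_axis_axis inner_commute algebra_simps)
  show ?thesis unfolding e by (auto intro!: derivative_eq_intros)
qed

lemma genn_has_pd: "genn f \<Longrightarrow> \<exists>f'. genn f' \<and> (\<forall>x. ((\<lambda>t. f (x + t *\<^sub>R axis i 1)) has_real_derivative f' x) (at 0))"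
proof (induction rule: genn.induct)
  case (gn_const c)
  show ?case
  proof (intro exI[of _ "\<lambda>_. 0"] conjI allI)
    show "genn (\<lambda>_::real^'a. 0::real)" by (rule genn.gn_const)
  qed simp
next
  case (gn_coord k)
  show ?case
  proof (intro exI[of _ "\<lambda>_. axis i 1 $ k"] conjI allI)
    show "genn (\<lambda>_. axis i 1 $ k)" by (rule genn.gn_const)
    fix x :: "real^'a"
    show "((\<lambda>t. (x + t *\<^sub>R axis i 1) $ k) has_real_derivative axis i 1 $ k) (at 0)"
      by (auto intro!: derivative_eq_intros)
  qed
next
  case gn_inner
  show ?case
  proof (intro exI[of _ "\<lambda>x. 2 * x $ i"] conjI allI)
    show "genn (\<lambda>x::real^'a. 2 * x $ i)" by (rule genn.gn_mult[OF genn.gn_const genn.gn_coord])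
  qed (rule line_inner_deriv)
next
  case (gn_add f g)
  obtain f' where h1: "genn f'" "\<forall>x. ((\<lambda>t. f (x + t *\<^sub>R axis i 1)) has_real_derivative f' x) (at 0)"
    using gn_add.IH(1) by blast
  obtain g' where h2: "genn g'" "\<forall>x. ((\<lambda>t. g (x + t *\<^sub>R axis i 1)) has_real_derivative g' x) (at 0)"
    using gn_add.IH(2) by blast
  note h = h1 h2
  show ?case
  proof (intro exI[of _ "\<lambda>x. f' x + g' x"] conjI allI)
    show "genn (\<lambda>x. f' x + g' x)" by (rule genn.gn_add[OF h1(1) h2(1)])
    fix x
    show "((\<lambda>t. f (x + t *\<^sub>R axis i 1) + g (x + t *\<^sub>R axis i 1)) has_real_derivative f' x + g' x) (at 0)"
      by (rule DERIV_add) (use h in auto)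
  qed
next
  case (gn_mult f g)
  obtain f' where h1: "genn f'" "\<forall>x. ((\<lambda>t. f (x + t *\<^sub>R axis i 1)) has_real_derivative f' x) (at 0)"
    using gn_mult.IH(1) by blast
  obtain g' where h2: "genn g'" "\<forall>x. ((\<lambda>t. g (x + t *\<^sub>R axis i 1)) has_real_derivative g' x) (at 0)"
    using gn_mult.IH(2) by blast
  note h = h1 h2
  show ?case
  proof (intro exI[of _ "\<lambda>x. f' x * g x + f x * g' x"] conjI allI)
    show "genn (\<lambda>x. f' x * g x + f x * g' x)" by (rule genn.gn_add[OF genn.gn_mult[OF h1(1) gn_mult.hyps(2)] genn.gn_mult[OF gn_mult.hyps(1) h2(1)]])
    fix x
    show "((\<lambda>t. f (x + t *\<^sub>R axis i 1) * g (x + t *\<^sub>R axis i 1)) has_real_derivative f' x * g x + f x * g' x) (at 0)"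
      using DERIV_mult'[of "\<lambda>t. f (x + t *\<^sub>R axis i 1)" "f' x" 0 UNIV "\<lambda>t. g (x + t *\<^sub>R axis i 1)" "g' x"] h
      by (simp add: algebra_simps)
  qed
next
  case (gn_comp g f)
  obtain f' where h: "genn f'" "\<forall>x. ((\<lambda>t. f (x + t *\<^sub>R axis i 1)) has_real_derivative f' x) (at 0)"
    using gn_comp.IH by blast
  have g: "gen1 (deriv g)" "\<And>t. (g has_real_derivative deriv g t) (at t)"
    using gen1_deriv[OF gn_comp(1)] by auto
  show ?case
  proof (intro exI[of _ "\<lambda>x. deriv g (f x) * f' x"] conjI allI)
    show "genn (\<lambda>x. deriv g (f x) * f' x)" by (rule genn.gn_mult[OF genn.gn_comp[OF g(1) gn_comp.hyps(2)] h(1)])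
    fix x
    show "((\<lambda>t. g (f (x + t *\<^sub>R axis i 1))) has_real_derivative deriv g (f x) * f' x) (at 0)"
      using DERIV_chain2[where f=g and Da="deriv g (f x)" and g="\<lambda>t. f (x + t *\<^sub>R axis i 1)" and x=0 and s=UNIV and Db="f' x"] g(2)[of "f x"] h by simp
  qed
qed

lemma genn_pd:
  assumes "genn f"
  shows "genn (partial_dir i f) \<and> (\<forall>x. ((\<lambda>t. f (x + t *\<^sub>R axis i 1)) has_real_derivative partial_dir i f x) (at 0))"
proof -
  obtain f' where f': "genn f'" "\<forall>x. ((\<lambda>t. f (x + t *\<^sub>R axis i 1)) has_real_derivative f' x) (at 0)"
    using genn_has_pd[OF assms] by blast
  have "partial_dir i f = f'"
  proof (rule ext)
    fix x show "partial_dir i f x = f' x"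
      unfolding partial_dir_def using f'(2) by (blast intro: DERIV_imp_deriv)
  qed
  then show ?thesis using f' by simp
qed

lemma genn_iter: "genn f \<Longrightarrow> genn (iter_partial is f)"
  by (induction "is") (simp_all add: genn_pd)

lemma genn_smooth: "genn f \<Longrightarrow> smooth_fun f"
  unfolding smooth_fun_def
proof (intro allI conjI)
  fix "is" i x
  assume f: "genn f"
  show "continuous_on UNIV (iter_partial is f)" by (rule genn_cont[OF genn_iter[OF f]])
  have "((\<lambda>t. iter_partial is f (x + t *\<^sub>R axis i 1)) has_real_derivative partial_dir i (iter_partial is f) x) (at 0)"
    using genn_pd[OF genn_iter[OF f]] by blast
  then show "(\<lambda>t. iter_partial is f (x + t *\<^sub>R axis i 1)) differentiable at 0"
    by (meson field_differentiable_def field_differentiable_imp_differentiable)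
qed

fun Pp :: "'n::finite list \<Rightarrow> nat \<Rightarrow> real^'n \<Rightarrow> real" where
  "Pp [] j = (\<lambda>y. if j = 0 then 1 else 0)"
| "Pp (i # is) j = (\<lambda>y. partial_dir i (Pp is j) y + (if j = 0 then 0 else 2 * y $ i * Pp is (j - 1) y))"

lemma partial_dir_const: "partial_dir i (\<lambda>_. c) = (\<lambda>_. 0)"
  by (auto simp: partial_dir_def)

lemma genn_Pp: "genn (Pp is j)"
proof (induction "is" arbitrary: j)
  case Nil
  show ?case
  proof (cases "j = 0")
    case True then show ?thesis using genn.gn_const[of 1] by simp
  next
    case False then show ?thesis using genn.gn_const[of 0] by simp
  qed
next
  case (Cons i "is")
  have a: "genn (partial_dir i (Pp is j))" using genn_pd[OF Cons.IH] by blast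
  show ?case
  proof (cases "j = 0")
    case True
    then show ?thesis using a by simp
  next
    case False
    have "genn (\<lambda>y. partial_dir i (Pp is j) y + (2 * y $ i) * Pp is (j - 1) y)"
      by (rule genn.gn_add[OF a genn.gn_mult[OF genn.gn_mult[OF genn.gn_const genn.gn_coord] Cons.IH]])
    then show ?thesis using False by (simp add: mult.assoc)
  qed
qed

lemma Pp_zero: "length is < j \<Longrightarrow> Pp is j = (\<lambda>_. 0)"
proof (induction "is" arbitrary: j)
  case Nil then show ?case by auto
next
  case (Cons i "is")
  then have "Pp is j = (\<lambda>_. 0)" "Pp is (j - 1) = (\<lambda>_. 0)" by auto
  then show ?case using Cons.prems by (auto simp: partial_dir_const)
qed

lemma Pp_0: "is \<noteq> [] \<Longrightarrow> Pp is 0 = (\<lambda>_. 0)"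
proof (induction "is")
  case Nil then show ?case by auto
next
  case (Cons i "is")
  show ?case
  proof (cases "is = []")
    case True then show ?thesis by (simp add: partial_dir_const)
  next
    case False then show ?thesis using Cons.IH by (simp add: partial_dir_const)
  qed
qed

definition zz :: "real \<Rightarrow> real \<Rightarrow> real^'n::finite \<Rightarrow> real" where
  "zz s c x = s * ((c *\<^sub>R x) \<bullet> (c *\<^sub>R x)) - s"

definition phi :: "nat \<Rightarrow> real \<Rightarrow> real \<Rightarrow> real^'n::finite \<Rightarrow> real" where
  "phi N s c x = G N (zz s c x)"

lemma dP_scaled:
  assumes "genn P"
  shows "((\<lambda>t. P (c *\<^sub>R (x + t *\<^sub>R axis i 1))) has_real_derivative c * partial_dir i P (c *\<^sub>R x)) (at 0)"
proof -
  have d1: "((\<lambda>t. P (c *\<^sub>R x + t *\<^sub>R axis i 1)) has_real_derivative partial_dir i P (c *\<^sub>R x)) (at (c * 0))"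
    using genn_pd[OF assms] by simp
  have d2: "((\<lambda>t. c * t) has_real_derivative c) (at 0)"
    by (auto intro!: derivative_eq_intros)
  have "((\<lambda>t. P (c *\<^sub>R x + (c * t) *\<^sub>R axis i 1)) has_real_derivative partial_dir i P (c *\<^sub>R x) * c) (at 0)"
    using DERIV_chain2[OF d1 d2] by simp
  moreover have "\<And>t. c *\<^sub>R (x + t *\<^sub>R axis i 1) = c *\<^sub>R x + (c * t) *\<^sub>R axis i (1::real)"
    by (simp add: scaleR_add_right)
  ultimately show ?thesis by (simp add: mult.commute)
qed

lemma dzz: "((\<lambda>t. zz s c (x + t *\<^sub>R axis i 1)) has_real_derivative s * c\<^sup>2 * (2 * x $ i)) (at 0)"
proof -
  have e: "(\<lambda>t. zz s c (x + t *\<^sub>R axis i 1)) = (\<lambda>t. s * c\<^sup>2 * ((x + t *\<^sub>R axis i 1) \<bullet> (x + t *\<^sub>R axis i 1)) - s)"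
    by (auto simp: zz_def power2_eq_square algebra_simps)
  show ?thesis unfolding e
    by (auto intro!: derivative_eq_intros line_inner_deriv)
qed

lemma dGz: "((\<lambda>t. (deriv ^^ j) (G N) (zz s c (x + t *\<^sub>R axis i 1))) has_real_derivative
   (deriv ^^ Suc j) (G N) (zz s c x) * (s * c\<^sup>2 * (2 * x $ i))) (at 0)"
  using DERIV_chain2[OF gen1_iter_has_deriv[OF gen1_G] dzz, of j N s c x i] by simp

lemma phi_formula:
  "iter_partial is (phi N s c) x =
     c ^ length is * (\<Sum>j\<le>length is. s ^ j * Pp is j (c *\<^sub>R x) * (deriv ^^ j) (G N) (zz s c x))"
proof (induction "is" arbitrary: x)
  case Nil
  then show ?case by (simp add: phi_def)
next
  case (Cons i "is")
  define L where "L = length is"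
  define F where "F = (\<lambda>x. c ^ L * (\<Sum>j\<le>L. s ^ j * Pp is j (c *\<^sub>R x) * (deriv ^^ j) (G N) (zz s c x)))"
  have IH: "iter_partial is (phi N s c) = F" using Cons.IH by (auto simp: F_def L_def)
  define e where "e = axis i (1::real)"
  define pd where "pd = (\<lambda>j. partial_dir i (Pp is j) (c *\<^sub>R x))"
  define Gd where "Gd = (\<lambda>j. (deriv ^^ j) (G N) (zz s c x))"
  define w where "w = s * c\<^sup>2 * (2 * x $ i)"
  have dterm: "((\<lambda>t. s ^ j * Pp is j (c *\<^sub>R (x + t *\<^sub>R e)) * (deriv ^^ j) (G N) (zz s c (x + t *\<^sub>R e)))
      has_real_derivative s ^ j * (Pp is j (c *\<^sub>R x) * (Gd (Suc j) * w) + c * pd j * Gd j)) (at 0)" for j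
  proof -
    have dP: "((\<lambda>t. Pp is j (c *\<^sub>R (x + t *\<^sub>R e))) has_real_derivative c * pd j) (at 0)"
      unfolding e_def pd_def by (rule dP_scaled[OF genn_Pp])
    have dG: "((\<lambda>t. (deriv ^^ j) (G N) (zz s c (x + t *\<^sub>R e))) has_real_derivative Gd (Suc j) * w) (at 0)"
      unfolding e_def Gd_def w_def by (rule dGz)
    have "((\<lambda>t. Pp is j (c *\<^sub>R (x + t *\<^sub>R e)) * (deriv ^^ j) (G N) (zz s c (x + t *\<^sub>R e)))
      has_real_derivative Pp is j (c *\<^sub>R x) * (Gd (Suc j) * w) + c * pd j * Gd j) (at 0)"
      using DERIV_mult'[OF dP dG] by (simp add: Gd_def)
    from DERIV_cmult[OF this, of "s ^ j"] show ?thesis by (simp add: mult.assoc)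
  qed
  have dF: "((\<lambda>t. F (x + t *\<^sub>R e)) has_real_derivative
      c ^ L * (\<Sum>j\<le>L. s ^ j * (Pp is j (c *\<^sub>R x) * (Gd (Suc j) * w) + c * pd j * Gd j))) (at 0)"
    unfolding F_def by (intro DERIV_cmult DERIV_sum dterm)
  have "iter_partial (i # is) (phi N s c) x = partial_dir i F x" using IH by simp
  also have "\<dots> = c ^ L * (\<Sum>j\<le>L. s ^ j * (Pp is j (c *\<^sub>R x) * (Gd (Suc j) * w) + c * pd j * Gd j))"
    unfolding partial_dir_def using dF unfolding e_def by (rule DERIV_imp_deriv)
  also have "\<dots> = c ^ Suc L * (\<Sum>j\<le>Suc L. s ^ j * Pp (i # is) j (c *\<^sub>R x) * Gd j)"
  proof -
    have pz: "pd (Suc L) = 0" unfolding pd_def using Pp_zero[of "is" "Suc L"] by (simp add: L_def partial_dir_const)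
    have "(\<Sum>j\<le>Suc L. s ^ j * Pp (i # is) j (c *\<^sub>R x) * Gd j)
       = (\<Sum>j\<le>Suc L. s ^ j * pd j * Gd j) + (\<Sum>j\<le>Suc L. s ^ j * (if j = 0 then 0 else 2 * (c * x $ i) * Pp is (j - 1) (c *\<^sub>R x)) * Gd j)"
    proof -
      have Pc: "Pp (i # is) j (c *\<^sub>R x) = pd j + (if j = 0 then 0 else 2 * (c * x $ i) * Pp is (j - 1) (c *\<^sub>R x))" for j
        by (simp add: pd_def)
      show ?thesis unfolding Pc by (simp add: sum.distrib algebra_simps del: Pp.simps)
    qed
    also have "(\<Sum>j\<le>Suc L. s ^ j * pd j * Gd j) = (\<Sum>j\<le>L. s ^ j * pd j * Gd j)"
      using pz by simp
    also have "(\<Sum>j\<le>Suc L. s ^ j * (if j = 0 then 0 else 2 * (c * x $ i) * Pp is (j - 1) (c *\<^sub>R x)) * Gd j)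
       = (\<Sum>j\<le>L. s ^ Suc j * (2 * (c * x $ i) * Pp is j (c *\<^sub>R x)) * Gd (Suc j))"
      by (subst sum.atMost_Suc_shift) simp
    finally have "c ^ Suc L * (\<Sum>j\<le>Suc L. s ^ j * Pp (i # is) j (c *\<^sub>R x) * Gd j)
       = c ^ L * (\<Sum>j\<le>L. c * (s ^ j * pd j * Gd j) + c * (s ^ Suc j * (2 * (c * x $ i) * Pp is j (c *\<^sub>R x)) * Gd (Suc j)))"
      by (simp add: sum.distrib sum_distrib_left algebra_simps del: Pp.simps)
    also have "\<dots> = c ^ L * (\<Sum>j\<le>L. s ^ j * (Pp is j (c *\<^sub>R x) * (Gd (Suc j) * w) + c * pd j * Gd j))"
      unfolding w_def by (intro arg_cong[where f="\<lambda>y. c ^ L * y"] sum.cong) (auto simp: power2_eq_square algebra_simps)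
    finally show ?thesis by (rule sym)
  qed
  finally show ?case by (simp add: Gd_def L_def del: Pp.simps)
qed

lemma zz_eq:
  assumes "0 < r1" "r1 < r2"
  shows "zz (r1\<^sup>2 / (r2\<^sup>2 - r1\<^sup>2)) (1 / r1) x = ((norm x)\<^sup>2 - r1\<^sup>2) / (r2\<^sup>2 - r1\<^sup>2)"
proof -
  have d: "r2\<^sup>2 - r1\<^sup>2 > 0" using assms by (simp add: power_strict_mono)
  have "zz (r1\<^sup>2 / (r2\<^sup>2 - r1\<^sup>2)) (1 / r1) x = r1\<^sup>2 / (r2\<^sup>2 - r1\<^sup>2) * ((norm x)\<^sup>2 / r1\<^sup>2) - r1\<^sup>2 / (r2\<^sup>2 - r1\<^sup>2)"
    using assms(1) by (simp add: zz_def power2_norm_eq_inner power_divide power2_eq_square) (metis dot_square_norm power2_eq_square)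
  also have "\<dots> = ((norm x)\<^sup>2 - r1\<^sup>2) / (r2\<^sup>2 - r1\<^sup>2)"
  proof -
    have gen: "a \<noteq> 0 \<Longrightarrow> dd \<noteq> 0 \<Longrightarrow> a / dd * (X / a) - a / dd = (X - a) / dd" for a dd X :: real
      by (simp add: field_simps)
    show ?thesis by (rule gen) (use d assms(1) in auto)
  qed
  finally show ?thesis .
qed

lemma zz_neg:
  assumes "0 < r1" "r1 < r2" "norm x < r1"
  shows "zz (r1\<^sup>2 / (r2\<^sup>2 - r1\<^sup>2)) (1 / r1) (x::real^'n::finite) < 0"
proof -
  have "r2\<^sup>2 - r1\<^sup>2 > 0" using assms by (simp add: power_strict_mono)
  moreover have "(norm x)\<^sup>2 < r1\<^sup>2" using assms by (simp add: power_strict_mono)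
  ultimately show ?thesis unfolding zz_eq[OF assms(1,2)] by (simp add: divide_neg_pos)
qed

lemma zz_ge1:
  assumes "0 < r1" "r1 < r2" "norm x \<ge> r2"
  shows "zz (r1\<^sup>2 / (r2\<^sup>2 - r1\<^sup>2)) (1 / r1) (x::real^'n::finite) \<ge> 1"
proof -
  have "r2\<^sup>2 - r1\<^sup>2 > 0" using assms by (simp add: power_strict_mono)
  moreover have "(norm x)\<^sup>2 \<ge> r2\<^sup>2" using assms by (simp add: power_mono)
  ultimately show ?thesis unfolding zz_eq[OF assms(1,2)] by simp
qed

lemma zz_ge1_strict:
  assumes "0 < r1" "r1 < r2" "norm x > r2"
  shows "zz (r1\<^sup>2 / (r2\<^sup>2 - r1\<^sup>2)) (1 / r1) (x::real^'n::finite) > 1"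
proof -
  have "r2\<^sup>2 - r1\<^sup>2 > 0" using assms by (simp add: power_strict_mono)
  moreover have "(norm x)\<^sup>2 > r2\<^sup>2" using assms by (simp add: power_strict_mono)
  ultimately show ?thesis unfolding zz_eq[OF assms(1,2)] by simp
qed

lemma zz_lt1:
  assumes "0 < r1" "r1 < r2" "norm x < r2"
  shows "zz (r1\<^sup>2 / (r2\<^sup>2 - r1\<^sup>2)) (1 / r1) (x::real^'n::finite) < 1"
proof -
  have "r2\<^sup>2 - r1\<^sup>2 > 0" using assms by (simp add: power_strict_mono)
  moreover have "(norm x)\<^sup>2 < r2\<^sup>2" using assms by (simp add: power_strict_mono)
  ultimately show ?thesis unfolding zz_eq[OF assms(1,2)] by simp
qed

lemma genn_phi: "genn (phi N s c :: real^'n::finite \<Rightarrow> real)"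
proof -
  have g: "gen1 (\<lambda>w. G N ((s * c\<^sup>2) * w + (- s)))" by (rule g1_aff[OF gen1_G])
  have "genn (\<lambda>x::real^'n. G N ((s * c\<^sup>2) * (x \<bullet> x) + (- s)))"
    by (rule genn.gn_comp[OF g genn.gn_inner])
  moreover have "phi N s c = (\<lambda>x::real^'n. G N ((s * c\<^sup>2) * (x \<bullet> x) + (- s)))"
    by (auto simp: phi_def zz_def power2_eq_square algebra_simps)
  ultimately show ?thesis by simp
qed

lemma phi_test:
  assumes "0 < r1" "r1 < r2" "N > 0"
  shows "test_fun (phi N (r1\<^sup>2 / (r2\<^sup>2 - r1\<^sup>2)) (1 / r1) :: real^'n::finite \<Rightarrow> real)"
proof -
  let ?f = "phi N (r1\<^sup>2 / (r2\<^sup>2 - r1\<^sup>2)) (1 / r1) :: real^'n \<Rightarrow> real"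
  have sub: "{x. ?f x \<noteq> 0} \<subseteq> cball 0 r2"
  proof
    fix x assume "x \<in> {x. ?f x \<noteq> 0}"
    then have "?f x \<noteq> 0" by simp
    then have "\<not> norm x \<ge> r2" using zz_ge1[OF assms(1,2)] G_right[OF _ assms(3)] by (auto simp: phi_def)
    then show "x \<in> cball 0 r2" by simp
  qed
  have "closure {x. ?f x \<noteq> 0} \<subseteq> cball 0 r2"
    using closure_minimal[OF sub closed_cball] .
  then have "compact (closure {x. ?f x \<noteq> 0})"
    by (metis compact_cball closed_closure compact_Int_closed inf.absorb_iff2)
  then show ?thesis unfolding test_fun_def using genn_smooth[OF genn_phi] by simp
qed

lemma s_bounds:
  assumes "0 < r1" "r1 < r2" "r2 \<le> sqrt \<sigma> * r1" "\<sigma> > 1"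
  shows "r1\<^sup>2 / (r2\<^sup>2 - r1\<^sup>2) > 0" "r1\<^sup>2 / (r2\<^sup>2 - r1\<^sup>2) \<ge> 1 / (\<sigma> - 1)"
    "(1 / r1) * (r1\<^sup>2 / (r2\<^sup>2 - r1\<^sup>2)) \<le> 1 / (r2 - r1)"
proof -
  have d: "r2\<^sup>2 - r1\<^sup>2 > 0" using assms by (simp add: power_strict_mono)
  then show "r1\<^sup>2 / (r2\<^sup>2 - r1\<^sup>2) > 0" using assms by simp
  have "r2\<^sup>2 \<le> (sqrt \<sigma> * r1)\<^sup>2" using assms by (intro power_mono) auto
  also have "\<dots> = \<sigma> * r1\<^sup>2" using assms by (simp add: power_mult_distrib)
  finally have "r2\<^sup>2 - r1\<^sup>2 \<le> (\<sigma> - 1) * r1\<^sup>2" by (simp add: algebra_simps)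
  then show "r1\<^sup>2 / (r2\<^sup>2 - r1\<^sup>2) \<ge> 1 / (\<sigma> - 1)"
    using d assms by (simp add: field_simps)
  have e: "r2\<^sup>2 - r1\<^sup>2 = (r2 - r1) * (r2 + r1)" by (simp add: power2_eq_square algebra_simps)
  have "(1 / r1) * (r1\<^sup>2 / (r2\<^sup>2 - r1\<^sup>2)) = r1 / ((r2 - r1) * (r2 + r1))"
    using assms unfolding e by (simp add: power2_eq_square field_simps)
  also have "\<dots> = (1 / (r2 - r1)) * (r1 / (r2 + r1))" by simp
  also have "\<dots> \<le> (1 / (r2 - r1)) * 1"
    by (intro mult_left_mono) (use assms in auto)
  also have "\<dots> = 1 / (r2 - r1)" by simp
  finally show "(1 / r1) * (r1\<^sup>2 / (r2\<^sup>2 - r1\<^sup>2)) \<le> 1 / (r2 - r1)" .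
qed

lemma phi_deriv_bound:
  fixes m N :: nat and lam \<sigma> :: real
  assumes m1: "m \<ge> 1" and lam: "lam > 1" and sig: "\<sigma> > 1" and Nm: "N \<ge> m"
    and Nlam: "real N - real m \<ge> real N / lam"
  shows "\<exists>K0>0. \<forall>(is::'n::finite list) r1 r2 x. length is = m \<longrightarrow> 0 < r1 \<longrightarrow> r1 < r2 \<longrightarrow> r2 \<le> sqrt \<sigma> * r1 \<longrightarrow>
     \<bar>iter_partial is (phi N (r1\<^sup>2 / (r2\<^sup>2 - r1\<^sup>2)) (1 / r1)) x\<bar>
        \<le> K0 / (r2 - r1) ^ m * phi N (r1\<^sup>2 / (r2\<^sup>2 - r1\<^sup>2)) (1 / r1) x powr (1 / lam)
     \<and> (norm x < r1 \<longrightarrow> iter_partial is (phi N (r1\<^sup>2 / (r2\<^sup>2 - r1\<^sup>2)) (1 / r1)) x = 0)"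
proof -
  have N0: "N > 0" using m1 Nm by simp
  have "\<forall>j. \<exists>Lj. j \<le> m \<longrightarrow> (\<forall>z. \<bar>(deriv ^^ j) (G N) z\<bar> \<le> Lj * G N z powr (1/lam))"
    using G_deriv_bound[OF _ Nm Nlam lam N0] by blast
  then obtain L where L: "\<And>j z. j \<le> m \<Longrightarrow> \<bar>(deriv ^^ j) (G N) z\<bar> \<le> L j * G N z powr (1/lam)"
    by metis
  have "\<forall>(is::'n list) j. \<exists>B. \<forall>y\<in>cball 0 (sqrt \<sigma>). \<bar>Pp is j y\<bar> \<le> B"
  proof (intro allI)
    fix "is" :: "'n list" and j
    have "compact (Pp is j ` cball 0 (sqrt \<sigma>))"
      by (rule compact_continuous_image[OF continuous_on_subset[OF genn_cont[OF genn_Pp]]]) auto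
    then show "\<exists>B. \<forall>y\<in>cball 0 (sqrt \<sigma>). \<bar>Pp is j y\<bar> \<le> B"
      using compact_imp_bounded bounded_real by (metis image_eqI)
  qed
  then obtain B where B: "\<And>(is::'n list) j y. y \<in> cball 0 (sqrt \<sigma>) \<Longrightarrow> \<bar>Pp is j y\<bar> \<le> B is j"
    by metis
  define Lm where "Lm = {is::'n list. set is \<subseteq> UNIV \<and> length is = m}"
  have finLm: "finite Lm" unfolding Lm_def by (rule finite_lists_length_eq) simp
  define M where "M = (\<Sum>is\<in>Lm. \<Sum>j\<le>m. \<bar>B is j\<bar>)"
  have BM: "\<bar>B is j\<bar> \<le> M" if "length is = m" "j \<le> m" for "is" j
  proof -
    have "\<bar>B is j\<bar> \<le> (\<Sum>j\<le>m. \<bar>B is j\<bar>)" by (rule member_le_sum) (use that in auto)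
    also have "\<dots> \<le> M" unfolding M_def
      by (rule member_le_sum[of "is" Lm "\<lambda>is. \<Sum>j\<le>m. \<bar>B is j\<bar>"]) (use that finLm in \<open>auto simp: Lm_def intro: sum_nonneg\<close>)
    finally show ?thesis .
  qed
  have M0: "M \<ge> 0" unfolding M_def by (intro sum_nonneg) auto
  define Ls where "Ls = (\<Sum>j\<le>m. \<bar>L j\<bar>)"
  have LLs: "\<bar>L j\<bar> \<le> Ls" if "j \<le> m" for j unfolding Ls_def by (rule member_le_sum) (use that in auto)
  have Ls0: "Ls \<ge> 0" unfolding Ls_def by (intro sum_nonneg) auto
  define S0 where "S0 = (max 1 (\<sigma> - 1)) ^ m"
  have S0: "S0 \<ge> 1" unfolding S0_def by simp
  define K0 where "K0 = real (Suc m) * S0 * M * Ls + 1"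
  have K0: "K0 > 0" unfolding K0_def using M0 Ls0 S0 by (simp add: add_nonneg_pos)
  show ?thesis
  proof (intro exI[of _ K0] conjI allI impI K0)
    fix "is" :: "'n list" and r1 r2 :: real and x :: "real^'n"
    assume len: "length is = m" and r: "0 < r1" "r1 < r2" "r2 \<le> sqrt \<sigma> * r1"
    define s where "s = r1\<^sup>2 / (r2\<^sup>2 - r1\<^sup>2)"
    define c where "c = 1 / r1"
    define z where "z = zz s c x"
    have s0: "s > 0" and s1: "s \<ge> 1 / (\<sigma> - 1)" and cs: "c * s \<le> 1 / (r2 - r1)"
      using s_bounds[OF r sig] unfolding s_def c_def by auto
    have c0: "c > 0" unfolding c_def using r by simp
    have form: "iter_partial is (phi N s c) x = c ^ m * (\<Sum>j\<le>m. s ^ j * Pp is j (c *\<^sub>R x) * (deriv ^^ j) (G N) z)"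
      unfolding z_def using phi_formula[of "is" N s c x] len by simp
    have phz: "phi N s c x = G N z" unfolding phi_def z_def ..
    have tb: "\<bar>s ^ j * Pp is j (c *\<^sub>R x) * (deriv ^^ j) (G N) z\<bar> \<le> s ^ m * S0 * M * Ls * G N z powr (1/lam)"
      if j: "j \<le> m" for j
    proof -
      have sj: "s ^ j \<le> s ^ m * S0"
      proof -
        have "s ^ j * (1 / (\<sigma> - 1)) ^ (m - j) \<le> s ^ j * s ^ (m - j)"
          using s0 s1 sig by (intro mult_left_mono power_mono) auto
        also have "\<dots> = s ^ m" using j by (simp flip: power_add)
        finally have "s ^ j \<le> s ^ m * (\<sigma> - 1) ^ (m - j)"
          using sig by (simp add: power_divide field_simps)
        also have "(\<sigma> - 1) ^ (m - j) \<le> (max 1 (\<sigma> - 1)) ^ (m - j)"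
          using sig by (intro power_mono) auto
        also have "\<dots> \<le> S0" unfolding S0_def by (rule power_increasing) auto
        finally show ?thesis using s0 by (simp add: mult_left_mono)
      qed
      have pg: "\<bar>Pp is j (c *\<^sub>R x)\<bar> * \<bar>(deriv ^^ j) (G N) z\<bar> \<le> M * Ls * G N z powr (1/lam)"
      proof (cases "norm (c *\<^sub>R x) \<le> sqrt \<sigma>")
        case True
        have "\<bar>Pp is j (c *\<^sub>R x)\<bar> \<le> M" using B[of "c *\<^sub>R x" "is" j] BM[OF len j] True by auto
        moreover have "\<bar>(deriv ^^ j) (G N) z\<bar> \<le> Ls * G N z powr (1/lam)"
          using L[OF j, of z] LLs[OF j] by (smt (verit) mult_right_mono powr_ge_zero abs_ge_self)
        ultimately show ?thesis
          by (smt (verit) M0 abs_ge_zero mult.assoc mult_mono)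
      next
        case False
        then have "norm x > sqrt \<sigma> * r1" using r c0 unfolding c_def by (simp add: field_simps)
        then have "norm x > r2" using r by simp
        then have z1: "z > 1" unfolding z_def s_def c_def by (rule zz_ge1_strict[OF r(1,2)])
        have "(deriv ^^ j) (G N) z = 0"
        proof (cases "j = 0")
          case True then show ?thesis using G_right[of z N] z1 N0 by simp
        next
          case False then show ?thesis using G_deriv_out[of j N z] z1 N0 by simp
        qed
        then show ?thesis using M0 Ls0 by simp
      qed
      have "\<bar>s ^ j * Pp is j (c *\<^sub>R x) * (deriv ^^ j) (G N) z\<bar> = s ^ j * (\<bar>Pp is j (c *\<^sub>R x)\<bar> * \<bar>(deriv ^^ j) (G N) z\<bar>)"
        using s0 by (simp add: abs_mult)
      also have "\<dots> \<le> (s ^ m * S0) * (M * Ls * G N z powr (1/lam))"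
        by (rule mult_mono[OF sj pg]) (use s0 S0 M0 Ls0 in auto)
      finally show ?thesis by (simp add: mult.assoc)
    qed
    have "\<bar>iter_partial is (phi N s c) x\<bar> = c ^ m * \<bar>\<Sum>j\<le>m. s ^ j * Pp is j (c *\<^sub>R x) * (deriv ^^ j) (G N) z\<bar>"
      unfolding form using c0 by (simp add: abs_mult)
    also have "\<dots> \<le> c ^ m * (\<Sum>j\<le>m. \<bar>s ^ j * Pp is j (c *\<^sub>R x) * (deriv ^^ j) (G N) z\<bar>)"
      by (intro mult_left_mono sum_abs) (use c0 in auto)
    also have "\<dots> \<le> c ^ m * (\<Sum>j\<le>m. s ^ m * S0 * M * Ls * G N z powr (1/lam))"
      using c0 by (intro mult_left_mono sum_mono tb) auto
    also have "\<dots> = (c * s) ^ m * (real (Suc m) * S0 * M * Ls) * G N z powr (1/lam)"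
      by (simp add: power_mult_distrib)
    also have "\<dots> \<le> (1 / (r2 - r1)) ^ m * K0 * G N z powr (1/lam)"
      using c0 s0 cs S0 M0 Ls0 r unfolding K0_def
      by (intro mult_right_mono mult_mono power_mono) auto
    finally show "\<bar>iter_partial is (phi N (r1\<^sup>2 / (r2\<^sup>2 - r1\<^sup>2)) (1 / r1)) x\<bar>
        \<le> K0 / (r2 - r1) ^ m * phi N (r1\<^sup>2 / (r2\<^sup>2 - r1\<^sup>2)) (1 / r1) x powr (1 / lam)"
      unfolding phz s_def[symmetric] c_def[symmetric] by (simp add: power_divide)
  next
    fix "is" :: "'n list" and r1 r2 :: real and x :: "real^'n"
    assume len: "length is = m" and r: "0 < r1" "r1 < r2" "r2 \<le> sqrt \<sigma> * r1" and xr: "norm x < r1"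
    define s where "s = r1\<^sup>2 / (r2\<^sup>2 - r1\<^sup>2)"
    define c where "c = 1 / r1"
    define z where "z = zz s c x"
    have z0: "z < 0" unfolding z_def s_def c_def by (rule zz_neg[OF r(1,2) xr])
    have form: "iter_partial is (phi N s c) x = c ^ m * (\<Sum>j\<le>m. s ^ j * Pp is j (c *\<^sub>R x) * (deriv ^^ j) (G N) z)"
      unfolding z_def using phi_formula[of "is" N s c x] len by simp
    have "is \<noteq> []" using len m1 by auto
    then have P0: "Pp is 0 (c *\<^sub>R x) = 0" by (subst Pp_0) auto
    have "s ^ j * Pp is j (c *\<^sub>R x) * (deriv ^^ j) (G N) z = 0" for j
    proof (cases "j = 0")
      case True then show ?thesis using P0 by simp
    next
      case False then show ?thesis using G_deriv_out[of j N z] z0 N0 by simp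
    qed
    then have "(\<Sum>j\<le>m. s ^ j * Pp is j (c *\<^sub>R x) * (deriv ^^ j) (G N) z) = 0"
      by (intro sum.neutral) auto
    then have "iter_partial is (phi N s c) x = 0" using form by simp
    then show "iter_partial is (phi N (r1\<^sup>2 / (r2\<^sup>2 - r1\<^sup>2)) (1 / r1)) x = 0"
      unfolding s_def c_def .
  qed
qed

lemma count_list_replicate': "count_list (replicate n i) k = (if i = k then n else 0)"
  by (induction n) auto

lemma count_list_exists: "\<exists>xs::'n::finite list. \<forall>i. count_list xs i = \<alpha> i"
proof -
  obtain ys :: "'n list" where ys: "set ys = UNIV" "distinct ys"
    using finite_distinct_list[of "UNIV :: 'n set"] by auto
  define xs where "xs = concat (map (\<lambda>i. replicate (\<alpha> i) i) ys)"
  have "count_list xs k = \<alpha> k" for k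
  proof -
    have "count_list xs k = sum_list (map (\<lambda>i. count_list (replicate (\<alpha> i) i) k) ys)"
      unfolding xs_def count_list_concat by (simp add: comp_def)
    also have "\<dots> = (\<Sum>i\<in>UNIV. count_list (replicate (\<alpha> i) i) k)"
      using sum_list_distinct_conv_sum_set[OF ys(2)] ys(1) by simp
    also have "\<dots> = (\<Sum>i\<in>UNIV. if i = k then \<alpha> i else 0)"
      by (simp add: count_list_replicate')
    also have "\<dots> = \<alpha> k" by simp
    finally show ?thesis .
  qed
  then show ?thesis by blast
qed

lemma mpartial_len: "length (SOME is. \<forall>i. count_list is i = (\<alpha>::'n::finite \<Rightarrow> nat) i) = mi_order \<alpha>"
proof -
  let ?xs = "SOME is. \<forall>i. count_list is i = \<alpha> i"
  have c: "\<forall>i. count_list ?xs i = \<alpha> i" by (rule someI_ex[OF count_list_exists])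
  have "length ?xs = sum (count_list ?xs) UNIV" by (rule sum_count_set[symmetric]) auto
  then show ?thesis using c by (simp add: mi_order_def)
qed

lemma integral_le_enn2real:
  fixes F :: "'a \<Rightarrow> real"
  shows "integral\<^sup>L M F \<le> enn2real (\<integral>\<^sup>+ x. ennreal \<bar>F x\<bar> \<partial>M)"
proof (cases "integrable M F")
  case True
  have "integral\<^sup>L M F \<le> integral\<^sup>L M (\<lambda>x. \<bar>F x\<bar>)"
    using True by (intro integral_mono) auto
  also have "\<dots> = enn2real (\<integral>\<^sup>+ x. ennreal \<bar>F x\<bar> \<partial>M)"
    using True by (intro enn2real_nn_integral_eq_integral[symmetric]) auto
  finally show ?thesis .
next
  case False
  then show ?thesis by (simp add: not_integrable_integral_eq)
qed

lemma young_pt: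
  fixes lam a b U p K e :: real
  assumes lam: "lam > 1" and a: "a > 0" and b: "b > 0" and U: "U \<ge> 0" and p: "p \<ge> 0" and K: "K \<ge> 0" and e: "e > 0"
  shows "a * U * K * p powr (1/lam) \<le> e / lam * (b * U powr lam * p)
     + (lam - 1) / lam * e powr (-1/(lam-1)) * K powr (lam/(lam-1)) * (a powr (lam/(lam-1)) * b powr (-1/(lam-1)))"
proof -
  define q where "q = lam / (lam - 1)"
  have q1: "q > 1" unfolding q_def using lam by (simp add: field_simps)
  have pq: "1/lam + 1/q = 1" unfolding q_def using lam by (simp add: field_simps)
  define x where "x = e powr (1/lam) * (b powr (1/lam) * U * p powr (1/lam))"
  define y where "y = e powr (-1/lam) * (K * a * b powr (-1/lam))"
  have x0: "x \<ge> 0" and y0: "y \<ge> 0" unfolding x_def y_def using U K a by auto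
  have xy: "x * y = a * U * K * p powr (1/lam)"
  proof -
    have "x * y = (e powr (1/lam) * e powr (-1/lam)) * (b powr (1/lam) * b powr (-1/lam)) * (a * U * K * p powr (1/lam))"
      unfolding x_def y_def by (simp add: algebra_simps)
    also have "e powr (1/lam) * e powr (-1/lam) = 1" using e by (simp add: powr_add[symmetric])
    also have "b powr (1/lam) * b powr (-1/lam) = 1" using b by (simp add: powr_add[symmetric])
    finally show ?thesis by simp
  qed
  have xp: "x powr lam = e * (b * U powr lam * p)"
  proof -
    have "x powr lam = (e powr (1/lam)) powr lam * ((b powr (1/lam)) powr lam * U powr lam * (p powr (1/lam)) powr lam)"
      unfolding x_def using U p by (simp add: powr_mult)
    also have "\<dots> = e * (b * U powr lam * p)"
      using lam e b p by (simp add: powr_powr)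
    finally show ?thesis .
  qed
  have yq: "y powr q = e powr (-1/(lam-1)) * K powr q * (a powr q * b powr (-1/(lam-1)))"
  proof -
    have "y powr q = (e powr (-1/lam)) powr q * (K powr q * a powr q * (b powr (-1/lam)) powr q)"
      unfolding y_def using K a by (simp add: powr_mult)
    also have "(e powr (-1/lam)) powr q = e powr (-1/(lam-1))"
      using lam unfolding q_def by (simp add: powr_powr field_simps)
    also have "(b powr (-1/lam)) powr q = b powr (-1/(lam-1))"
      using lam unfolding q_def by (simp add: powr_powr field_simps)
    finally show ?thesis by (simp add: algebra_simps)
  qed
  have "x * y \<le> x powr lam / lam + y powr q / q"
    by (rule Youngs_inequality[OF lam q1 pq x0 y0])
  also have "\<dots> = e / lam * (b * U powr lam * p)
     + (lam - 1) / lam * e powr (-1/(lam-1)) * K powr (lam/(lam-1)) * (a powr (lam/(lam-1)) * b powr (-1/(lam-1)))"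
    unfolding xp yq using lam by (simp add: q_def field_simps)
  finally show ?thesis unfolding xy .
qed

lemma opt_eps:
  fixes lam J D T Nc :: real
  assumes lam: "lam > 1" and J: "J > 0" and D: "D \<ge> 0" and T: "T \<ge> 0" and Nc: "Nc \<ge> 0"
    and H: "\<And>e. e > 0 \<Longrightarrow> J \<le> Nc * (e / lam * D + (lam - 1) / lam * e powr (-1/(lam-1)) * T)"
  shows "J powr lam \<le> Nc powr lam * T powr (lam - 1) * D \<and> T > 0"
proof -
  have Nc0: "Nc > 0"
  proof (rule ccontr)
    assume "\<not> Nc > 0" then have "Nc = 0" using Nc by simp
    then show False using H[of 1] J by simp
  qed
  have D0: "D > 0"
  proof (rule ccontr)
    assume "\<not> D > 0" then have D0: "D = 0" using D by simp
    show False
    proof (cases "T = 0")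
      case True then show False using H[of 1] J D0 by simp
    next
      case False
      then have Tp: "T > 0" using T by simp
      define e where "e = (J / (2 * Nc * T)) powr (-(lam - 1))"
      have e0: "e > 0" unfolding e_def using J Nc0 Tp by simp
      have "e powr (-1/(lam-1)) = (J / (2 * Nc * T)) powr ((-(lam - 1)) * (-1/(lam-1)))"
        unfolding e_def by (simp add: powr_powr)
      also have "(-(lam - 1)) * (-1/(lam-1)) = 1" using lam by (simp add: field_simps)
      finally have ee: "e powr (-1/(lam-1)) = J / (2 * Nc * T)" using J Nc0 Tp by simp
      have "J \<le> Nc * (e / lam * D + (lam - 1) / lam * e powr (-1/(lam-1)) * T)" by (rule H[OF e0])
      also have "\<dots> = Nc * ((lam - 1) / lam * (J / (2 * Nc * T)) * T)" unfolding ee D0 by simp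
      also have "\<dots> = (lam - 1) / lam * J / 2" using Nc0 Tp by simp
      also have "\<dots> < J" using lam J by (simp add: field_simps) (smt (verit) mult_pos_pos)
      finally show False by simp
    qed
  qed
  have T0: "T > 0"
  proof (rule ccontr)
    assume "\<not> T > 0" then have T0: "T = 0" using T by simp
    define e where "e = lam * J / (2 * Nc * D)"
    have e0: "e > 0" unfolding e_def using J Nc0 D0 lam by simp
    have "J \<le> Nc * (e / lam * D)" using H[OF e0] T0 by simp
    also have "\<dots> = J / 2" unfolding e_def using Nc0 D0 lam by (simp add: field_simps)
    finally show False using J by simp
  qed
  define k where "k = (lam - 1) / lam"
  define e where "e = (T / D) powr k"
  have e0: "e > 0" unfolding e_def using T0 D0 by simp
  have t1: "e * D = T powr k * D powr (1 / lam)"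
  proof -
    have "e * D = T powr k * (D powr 1 / D powr k)" unfolding e_def using T0 D0 by (simp add: powr_divide)
    also have "D powr 1 / D powr k = D powr (1 - k)" by (simp add: powr_diff)
    also have "1 - k = 1 / lam" unfolding k_def using lam by (simp add: field_simps)
    finally show ?thesis .
  qed
  have t2: "e powr (-1/(lam-1)) * T = T powr k * D powr (1 / lam)"
  proof -
    have "e powr (-1/(lam-1)) = (T / D) powr (k * (-1/(lam-1)))" unfolding e_def by (simp add: powr_powr)
    also have "k * (-1/(lam-1)) = - (1 / lam)" unfolding k_def using lam by (simp add: field_simps)
    finally have a1: "e powr (-1/(lam-1)) = (T / D) powr (- (1 / lam))" .
    have a2: "(T / D) powr (- (1 / lam)) = T powr (- (1 / lam)) * D powr (1 / lam)"
      using T0 D0 by (simp add: powr_minus powr_divide) (simp add: field_simps)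
    have a3: "T powr (- (1 / lam)) * T = T powr k"
    proof -
      have "T powr (- (1 / lam)) * T = T powr (- (1 / lam)) * T powr 1" using T0 by simp
      also have "\<dots> = T powr (- (1 / lam) + 1)" by (rule powr_add[symmetric])
      also have "- (1 / lam) + 1 = k" unfolding k_def using lam by (simp add: field_simps)
      finally show ?thesis .
    qed
    have "e powr (-1/(lam-1)) * T = (T powr (- (1 / lam)) * T) * D powr (1 / lam)"
      unfolding a1 a2 by (simp add: algebra_simps)
    also have "\<dots> = T powr k * D powr (1 / lam)" unfolding a3 ..
    finally show ?thesis .
  qed
  have "J \<le> Nc * (e / lam * D + (lam - 1) / lam * e powr (-1/(lam-1)) * T)" by (rule H[OF e0])
  also have "\<dots> = Nc * (1 / lam * (e * D) + (lam - 1) / lam * (e powr (-1/(lam-1)) * T))" by (simp add: algebra_simps)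
  also have "\<dots> = Nc * (T powr k * D powr (1 / lam))"
    unfolding t1 t2 using lam by (simp add: field_simps)
  finally have JJ: "J \<le> Nc * (T powr k * D powr (1 / lam))" .
  have "J powr lam \<le> (Nc * (T powr k * D powr (1 / lam))) powr lam"
    by (rule powr_mono2) (use lam J JJ in auto)
  also have "\<dots> = Nc powr lam * ((T powr k) powr lam * (D powr (1 / lam)) powr lam)"
    using Nc0 T0 D0 by (simp add: powr_mult)
  also have "\<dots> = Nc powr lam * T powr (lam - 1) * D"
    unfolding k_def using lam D0 by (simp add: powr_powr)
  finally show ?thesis using T0 by simp
qed

lemma instance_bound:
  fixes m N :: nat and lam \<sigma> K0 :: real
    and aa :: "('n::finite \<Rightarrow> nat) \<Rightarrow> real^'n \<Rightarrow> real \<Rightarrow> real" and a b u :: "real^'n \<Rightarrow> real"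
    and r1 r2 r :: real
  assumes m1: "m \<ge> 1" and lam: "lam > 1" and sig: "\<sigma> > 1" and N0: "N > 0" and K0: "K0 > 0"
    and Kb: "\<forall>(is::'n list) r1 r2 x. length is = m \<longrightarrow> 0 < r1 \<longrightarrow> r1 < r2 \<longrightarrow> r2 \<le> sqrt \<sigma> * r1 \<longrightarrow>
     \<bar>iter_partial is (phi N (r1\<^sup>2 / (r2\<^sup>2 - r1\<^sup>2)) (1 / r1)) x\<bar>
        \<le> K0 / (r2 - r1) ^ m * phi N (r1\<^sup>2 / (r2\<^sup>2 - r1\<^sup>2)) (1 / r1) x powr (1 / lam)
     \<and> (norm x < r1 \<longrightarrow> iter_partial is (phi N (r1\<^sup>2 / (r2\<^sup>2 - r1\<^sup>2)) (1 / r1)) x = 0)"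
    and am: "a \<in> borel_measurable lborel" and apos: "\<forall>x. a x > 0"
    and bm: "b \<in> borel_measurable lborel" and bpos: "\<forall>x. b x > 0"
    and ab: "\<forall>\<alpha>. mi_order \<alpha> = m \<longrightarrow> (AE x in lborel. \<forall>\<zeta>. \<bar>aa \<alpha> x \<zeta>\<bar> \<le> a x * \<bar>\<zeta>\<bar>)"
    and sol: "is_solution m lam aa b u"
    and r12: "0 < r1" "r1 < r2" "r2 \<le> sqrt \<sigma> * r1"
    and rr: "r1 < r" "r < r2"
  defines "Nc \<equiv> real (card {\<alpha>::'n \<Rightarrow> nat. mi_order \<alpha> = m})"
  shows "((Nc + 1) * K0) powr lam * sqrt \<sigma> powr (real CARD('n) * (lam - 1)) *
           (J_fun lam b u r2 - J_fun lam b u r1) \<ge>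
         (r2 - r1) powr (lam * m) * r1 powr ((1 - lam) * CARD('n)) * h_fun lam \<sigma> a b r * (J_fun lam b u r1) powr lam"
proof -
  define f where "f = (\<lambda>x. b x * \<bar>u x\<bar> powr lam)"
  have f0: "f x \<ge> 0" for x unfolding f_def using bpos by (simp add: less_imp_le)
  define s where "s = r1\<^sup>2 / (r2\<^sup>2 - r1\<^sup>2)"
  define c where "c = 1 / r1"
  define \<phi> where "\<phi> = (phi N s c :: real^'n \<Rightarrow> real)"
  define A where "A = ball (0::real^'n) r2 - ball 0 r1"
  define J1 where "J1 = J_fun lam b u r1"
  define J2 where "J2 = J_fun lam b u r2"
  define D where "D = J2 - J1"
  define K1 where "K1 = K0 / (r2 - r1) ^ m"
  define q where "q = lam / (lam - 1)"
  define w where "w = (\<lambda>x. a x powr q * b x powr (-1/(lam-1)))"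
  define S where "S = {\<alpha>::'n \<Rightarrow> nat. mi_order \<alpha> = m}"
  define F where "F = (\<lambda>x. \<Sum>\<alpha>\<in>S. aa \<alpha> x (u x) * mpartial \<alpha> \<phi> x)"
  have Ameas: "A \<in> sets lborel" unfolding A_def by simp
  have loc: "loc_integrable f" using sol unfolding is_solution_def f_def by simp
  have ic: "set_integrable lborel (cball 0 r2) f" using loc unfolding loc_integrable_def by simp
  have ib1: "set_integrable lborel (ball 0 r1) f" by (rule set_integrable_subset[OF ic]) (use r12 in auto)
  have ib2: "set_integrable lborel (ball 0 r2) f" by (rule set_integrable_subset[OF ic]) auto
  have iA: "set_integrable lborel A f" by (rule set_integrable_subset[OF ic]) (auto simp: A_def)
  have DA: "D = (LINT x:A|lborel. f x)"
  proof -
    have u: "ball 0 r2 = ball 0 r1 \<union> A" using r12 by (auto simp: A_def)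
    have "J2 = (LINT x:ball 0 r1 \<union> A|lborel. f x)"
      unfolding J2_def J_fun_def f_def[symmetric] u[symmetric] ..
    also have "\<dots> = (LINT x:ball 0 r1|lborel. f x) + (LINT x:A|lborel. f x)"
      by (rule set_integral_Un[OF _ ib1 iA]) (auto simp: A_def)
    finally have "J2 = (LINT x:ball 0 r1|lborel. f x) + (LINT x:A|lborel. f x)" .
    then show ?thesis unfolding D_def J1_def J_fun_def f_def[symmetric] by simp
  qed
  have D0: "D \<ge> 0" unfolding DA set_lebesgue_integral_def
    by (rule integral_nonneg_AE) (simp add: f0)
  have \<phi>test: "test_fun \<phi>" unfolding \<phi>_def s_def c_def by (rule phi_test[OF r12(1,2) N0])
  have \<phi>0: "\<phi> x \<ge> 0" for x unfolding \<phi>_def phi_def by (rule G_ge0)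
  have \<phi>1: "\<phi> x \<le> 1" for x unfolding \<phi>_def phi_def by (rule G_le1)
  have \<phi>in: "\<phi> x = 1" if "norm x < r1" for x
    unfolding \<phi>_def phi_def s_def c_def using zz_neg[OF r12(1,2) that] by (simp add: G_left)
  have \<phi>out: "\<phi> x = 0" if "norm x \<ge> r2" for x
    unfolding \<phi>_def phi_def s_def c_def using zz_ge1[OF r12(1,2) that] N0 by (simp add: G_right)
  have \<phi>meas: "\<phi> \<in> borel_measurable lborel"
    using borel_measurable_continuous_onI[OF genn_cont[OF genn_phi]] unfolding \<phi>_def by simp
  have gint: "integrable lborel (\<lambda>x. indicator (cball 0 r2) x *\<^sub>R f x)"
    using ic unfolding set_integrable_def .
  have fphi_eq: "f x * \<phi> x = (indicator (cball 0 r2) x *\<^sub>R f x) * \<phi> x" for x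
    using \<phi>out[of x] by (cases "x \<in> cball 0 r2") auto
  have fphi_meas: "(\<lambda>x. f x * \<phi> x) \<in> borel_measurable lborel"
    unfolding fphi_eq using borel_measurable_integrable[OF gint] \<phi>meas by measurable
  have fphi_int: "integrable lborel (\<lambda>x. f x * \<phi> x)"
  proof (rule Bochner_Integration.integrable_bound[OF gint fphi_meas])
    show "AE x in lborel. norm (f x * \<phi> x) \<le> norm (indicator (cball 0 r2) x *\<^sub>R f x)"
    proof (rule AE_I2)
      fix x
      have "norm (f x * \<phi> x) = \<bar>indicator (cball 0 r2) x *\<^sub>R f x\<bar> * \<phi> x"
        using fphi_eq[of x] \<phi>0[of x] by (simp add: abs_mult)
      also have "\<dots> \<le> \<bar>indicator (cball 0 r2) x *\<^sub>R f x\<bar> * 1"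
        by (intro mult_left_mono \<phi>1) auto
      finally show "norm (f x * \<phi> x) \<le> norm (indicator (cball 0 r2) x *\<^sub>R f x)" by simp
    qed
  qed
  have J1le: "J1 \<le> (\<integral>x. f x * \<phi> x \<partial>lborel)"
    unfolding J1_def J_fun_def set_lebesgue_integral_def f_def[symmetric]
  proof (rule integral_mono)
    show "integrable lborel (\<lambda>x. indicat_real (ball 0 r1) x *\<^sub>R f x)"
      using ib1 unfolding set_integrable_def .
    show "integrable lborel (\<lambda>x. f x * \<phi> x)" by (rule fphi_int)
    fix x
    show "indicat_real (ball 0 r1) x *\<^sub>R f x \<le> f x * \<phi> x"
      using \<phi>in[of x] \<phi>0[of x] f0[of x] by (cases "x \<in> ball 0 r1") auto
  qed
  have solF: "(\<integral>x. f x * \<phi> x \<partial>lborel) \<le> integral\<^sup>L lborel F"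
    using sol \<phi>test \<phi>0 unfolding is_solution_def F_def S_def f_def by blast
  have Fle: "integral\<^sup>L lborel F \<le> enn2real (\<integral>\<^sup>+ x. ennreal \<bar>F x\<bar> \<partial>lborel)"
    by (rule integral_le_enn2real)
  have K1_0: "K1 \<ge> 0" unfolding K1_def using K0 r12 by simp
  have mpb: "\<bar>mpartial \<alpha> \<phi> x\<bar> \<le> K1 * \<phi> x powr (1/lam) * indicator A x" if "\<alpha> \<in> S" for \<alpha> x
  proof -
    define "is" where "is = (SOME is. \<forall>i. count_list is i = \<alpha> i)"
    have len: "length is = m" unfolding is_def mpartial_len using that by (simp add: S_def)
    have mp: "mpartial \<alpha> \<phi> x = iter_partial is \<phi> x" unfolding mpartial_def is_def ..
    have kb: "\<bar>iter_partial is \<phi> x\<bar> \<le> K1 * \<phi> x powr (1/lam)" "norm x < r1 \<Longrightarrow> iter_partial is \<phi> x = 0"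
      using Kb[rule_format, OF len r12] unfolding \<phi>_def s_def c_def K1_def by auto
    show ?thesis
    proof (cases "x \<in> A")
      case True then show ?thesis using kb mp by simp
    next
      case False
      then have "norm x < r1 \<or> norm x \<ge> r2" unfolding A_def by auto
      then show ?thesis
      proof
        assume "norm x < r1" then show ?thesis using kb mp False by simp
      next
        assume "norm x \<ge> r2" then have "\<phi> x = 0" by (rule \<phi>out)
        then show ?thesis using kb mp False by simp
      qed
    qed
  qed
  have Fpt: "\<bar>F x\<bar> \<le> Nc * (a x * \<bar>u x\<bar> * K1 * \<phi> x powr (1/lam) * indicator A x)"
    if hx': "finite S \<longrightarrow> (\<forall>\<alpha>\<in>S. \<forall>\<zeta>. \<bar>aa \<alpha> x \<zeta>\<bar> \<le> a x * \<bar>\<zeta>\<bar>)" for x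
  proof (cases "finite S")
    case True
    note hx = hx'[rule_format, OF True]
    have "\<bar>F x\<bar> \<le> (\<Sum>\<alpha>\<in>S. \<bar>aa \<alpha> x (u x) * mpartial \<alpha> \<phi> x\<bar>)" unfolding F_def by (rule sum_abs)
    also have "\<dots> \<le> (\<Sum>\<alpha>\<in>S. a x * \<bar>u x\<bar> * (K1 * \<phi> x powr (1/lam) * indicator A x))"
    proof (rule sum_mono)
      fix \<alpha> assume "\<alpha> \<in> S"
      show "\<bar>aa \<alpha> x (u x) * mpartial \<alpha> \<phi> x\<bar> \<le> a x * \<bar>u x\<bar> * (K1 * \<phi> x powr (1/lam) * indicator A x)"
      proof -
        have ax0: "0 \<le> a x * \<bar>u x\<bar>" using apos[rule_format, of x] by simp
        show ?thesis
          unfolding abs_mult by (rule mult_mono) (use hx \<open>\<alpha> \<in> S\<close> mpb ax0 in auto)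
      qed
    qed
    also have "\<dots> = Nc * (a x * \<bar>u x\<bar> * K1 * \<phi> x powr (1/lam) * indicator A x)"
      by (simp add: Nc_def S_def[symmetric] mult_ac)
    finally show ?thesis .
  next
    case False
    then have "F x = 0" unfolding F_def by simp
    moreover have "Nc * (a x * \<bar>u x\<bar> * K1 * \<phi> x powr (1/lam) * indicator A x) \<ge> 0"
      unfolding Nc_def using apos K1_0 by (intro mult_nonneg_nonneg) (auto intro: less_imp_le)
    ultimately show ?thesis by simp
  qed
  have AEb: "AE x in lborel. finite S \<longrightarrow> (\<forall>\<alpha>\<in>S. \<forall>\<zeta>. \<bar>aa \<alpha> x \<zeta>\<bar> \<le> a x * \<bar>\<zeta>\<bar>)"
  proof (cases "finite S")
    case True
    have "AE x in lborel. \<forall>\<alpha>\<in>S. \<forall>\<zeta>. \<bar>aa \<alpha> x \<zeta>\<bar> \<le> a x * \<bar>\<zeta>\<bar>"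
      by (rule AE_finite_allI[OF True]) (use ab in \<open>auto simp: S_def\<close>)
    then show ?thesis by auto
  qed simp
  define g1 where "g1 = (\<lambda>x. f x * \<phi> x * indicator A x)"
  define g2 where "g2 = (\<lambda>x. w x * indicator A x)"
  define c1 where "c1 = (\<lambda>e::real. Nc * (e / lam))"
  define c2 where "c2 = (\<lambda>e::real. Nc * ((lam - 1) / lam * e powr (-1/(lam-1)) * K1 powr q))"
  have Nc0: "Nc \<ge> 0" unfolding Nc_def by simp
  have g1_0: "g1 x \<ge> 0" for x unfolding g1_def using f0 \<phi>0 by simp
  have g2_0: "g2 x \<ge> 0" for x unfolding g2_def w_def by simp
  have c1_0: "e > 0 \<Longrightarrow> c1 e \<ge> 0" for e unfolding c1_def using Nc0 lam by simp
  have c2_0: "c2 e \<ge> 0" for e unfolding c2_def using Nc0 lam by simp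
  have young: "a x * \<bar>u x\<bar> * K1 * \<phi> x powr (1/lam) * indicator A x
      \<le> (e / lam * (f x * \<phi> x) + (lam - 1) / lam * e powr (-1/(lam-1)) * K1 powr q * w x) * indicator A x"
    if e: "e > 0" for e x
    using young_pt[OF lam apos[rule_format] bpos[rule_format] abs_ge_zero \<phi>0 K1_0 e, of x "u x" x x]
    unfolding f_def w_def q_def
    by (intro mult_right_mono) (auto simp: mult_ac)
  have pt: "Nc * (a x * \<bar>u x\<bar> * K1 * \<phi> x powr (1/lam) * indicator A x) \<le> c1 e * g1 x + c2 e * g2 x"
    if e: "e > 0" for e x
  proof -
    have "Nc * (a x * \<bar>u x\<bar> * K1 * \<phi> x powr (1/lam) * indicator A x)
      \<le> Nc * ((e / lam * (f x * \<phi> x) + (lam - 1) / lam * e powr (-1/(lam-1)) * K1 powr q * w x) * indicator A x)"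
      by (rule mult_left_mono[OF young[OF e] Nc0])
    also have "\<dots> = c1 e * g1 x + c2 e * g2 x"
      unfolding c1_def c2_def g1_def g2_def by (simp add: algebra_simps)
    finally show ?thesis .
  qed
  have g1m: "g1 \<in> borel_measurable lborel" unfolding g1_def using fphi_meas Ameas by measurable
  have g2m: "g2 \<in> borel_measurable lborel" unfolding g2_def w_def using am bm Ameas by measurable
  have nnF: "(\<integral>\<^sup>+ x. ennreal \<bar>F x\<bar> \<partial>lborel) \<le> ennreal (c1 e) * (\<integral>\<^sup>+ x. ennreal (g1 x) \<partial>lborel) + ennreal (c2 e) * (\<integral>\<^sup>+ x. ennreal (g2 x) \<partial>lborel)"
    if e: "e > 0" for e
  proof -
    have "(\<integral>\<^sup>+ x. ennreal \<bar>F x\<bar> \<partial>lborel) \<le> (\<integral>\<^sup>+ x. ennreal (c1 e) * ennreal (g1 x) + ennreal (c2 e) * ennreal (g2 x) \<partial>lborel)"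
    proof (rule nn_integral_mono_AE)
      show "AE x in lborel. ennreal \<bar>F x\<bar> \<le> ennreal (c1 e) * ennreal (g1 x) + ennreal (c2 e) * ennreal (g2 x)"
        using AEb
      proof eventually_elim
        case (elim x)
        have "\<bar>F x\<bar> \<le> c1 e * g1 x + c2 e * g2 x" using Fpt[OF elim] pt[OF e, of x] by linarith
        then have "ennreal \<bar>F x\<bar> \<le> ennreal (c1 e * g1 x + c2 e * g2 x)" by (rule ennreal_leI)
        also have "\<dots> = ennreal (c1 e) * ennreal (g1 x) + ennreal (c2 e) * ennreal (g2 x)"
          using c1_0[OF e] c2_0 g1_0 g2_0 by (simp add: ennreal_plus ennreal_mult)
        finally show ?case .
      qed
    qed
    also have "\<dots> = ennreal (c1 e) * (\<integral>\<^sup>+ x. ennreal (g1 x) \<partial>lborel) + ennreal (c2 e) * (\<integral>\<^sup>+ x. ennreal (g2 x) \<partial>lborel)"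
      using g1m g2m by (simp add: nn_integral_add nn_integral_cmult)
    finally show ?thesis .
  qed
  have ng1: "(\<integral>\<^sup>+ x. ennreal (g1 x) \<partial>lborel) \<le> ennreal D"
  proof -
    have "(\<integral>\<^sup>+ x. ennreal (g1 x) \<partial>lborel) \<le> (\<integral>\<^sup>+ x. ennreal (indicator A x *\<^sub>R f x) \<partial>lborel)"
      by (intro nn_integral_mono ennreal_leI) (use f0 \<phi>1 in \<open>auto simp: g1_def indicator_def intro: mult_left_le\<close>)
    also have "\<dots> = ennreal D"
      unfolding DA set_lebesgue_integral_def
      by (rule nn_integral_eq_integral) (use iA f0 in \<open>auto simp: set_integrable_def\<close>)
    finally show ?thesis .
  qed
  define Ann where "Ann = ball (0::real^'n) (sqrt \<sigma> * r) - ball 0 (r / sqrt \<sigma>)"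
  define Ir where "Ir = (\<integral>\<^sup>+ x. ennreal (a x powr (lam / (lam - 1)) * b x powr (- 1 / (lam - 1))) * indicator Ann x \<partial>lborel)"
  define n where "n = real CARD('n)"
  have hdef: "h_fun lam \<sigma> a b r = (if Ir = \<infinity> then 0 else (enn2real Ir / r ^ CARD('n)) powr (1 - lam))"
    unfolding h_fun_def Ir_def Ann_def Let_def ..
  define IA where "IA = (\<integral>\<^sup>+ x. ennreal (g2 x) \<partial>lborel)"
  have sq: "sqrt \<sigma> > 1" using sig by simp
  have AAnn: "A \<subseteq> Ann"
  proof
    fix x assume "x \<in> A"
    then have x: "r1 \<le> norm x" "norm x < r2" unfolding A_def by auto
    have "r / sqrt \<sigma> < r1"
      using rr r12 sq by (simp add: divide_less_eq mult.commute)
    moreover have "r2 < sqrt \<sigma> * r"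
      using rr r12 sq by (smt (verit) mult_strict_left_mono)
    ultimately show "x \<in> Ann" using x unfolding Ann_def by auto
  qed
  have IAIr: "IA \<le> Ir"
    unfolding IA_def Ir_def g2_def w_def q_def
    by (intro nn_integral_mono) (use AAnn in \<open>auto simp: indicator_def\<close>)
  have J1_0: "J1 \<ge> 0" unfolding J1_def J_fun_def set_lebesgue_integral_def f_def[symmetric]
    by (rule integral_nonneg_AE) (simp add: f0)
  have lhs0: "((Nc + 1) * K0) powr lam * sqrt \<sigma> powr (real CARD('n) * (lam - 1)) * D \<ge> 0"
    using D0 by simp
  show ?thesis
  proof (cases "J1 = 0 \<or> Ir = \<infinity>")
    case True
    then have z: "(r2 - r1) powr (lam * m) * r1 powr ((1 - lam) * CARD('n)) * h_fun lam \<sigma> a b r * J_fun lam b u r1 powr lam = 0"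
      unfolding hdef J1_def by auto
    show ?thesis using lhs0 z unfolding D_def J1_def J2_def by linarith
  next
    case False
    then have J1p: "J1 > 0" and Irf: "Ir < \<infinity>" using J1_0 by (auto simp: top.not_eq_extremum)
    have IAf: "IA < \<infinity>" using IAIr Irf by (simp add: le_less_trans)
    define IAr where "IAr = enn2real IA"
    have IAe: "IA = ennreal IAr" unfolding IAr_def using IAf by simp
    have IAr0: "IAr \<ge> 0" unfolding IAr_def by simp
    define T where "T = K1 powr q * IAr"
    have T0: "T \<ge> 0" unfolding T_def using IAr0 by simp
    have key: "J1 \<le> Nc * (e / lam * D + (lam - 1) / lam * e powr (-1/(lam-1)) * T)" if e: "e > 0" for e
    proof -
      have "J1 \<le> integral\<^sup>L lborel F" using J1le solF by linarith
      also have "\<dots> \<le> enn2real (\<integral>\<^sup>+ x. ennreal \<bar>F x\<bar> \<partial>lborel)" by (rule Fle)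
      also have "\<dots> \<le> enn2real (ennreal (c1 e) * ennreal D + ennreal (c2 e) * ennreal IAr)"
      proof (rule enn2real_mono)
        have "(\<integral>\<^sup>+ x. ennreal \<bar>F x\<bar> \<partial>lborel) \<le> ennreal (c1 e) * (\<integral>\<^sup>+ x. ennreal (g1 x) \<partial>lborel) + ennreal (c2 e) * IA"
          using nnF[OF e] unfolding IA_def .
        also have "\<dots> \<le> ennreal (c1 e) * ennreal D + ennreal (c2 e) * ennreal IAr"
          unfolding IAe by (intro add_mono mult_left_mono ng1) auto
        finally show "(\<integral>\<^sup>+ x. ennreal \<bar>F x\<bar> \<partial>lborel) \<le> ennreal (c1 e) * ennreal D + ennreal (c2 e) * ennreal IAr" .
        show "ennreal (c1 e) * ennreal D + ennreal (c2 e) * ennreal IAr < top"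
          by (simp add: ennreal_mult_less_top del: ennreal_plus ennreal_mult)
      qed
      also have "\<dots> = c1 e * D + c2 e * IAr"
      proof -
        have "ennreal (c1 e * D + c2 e * IAr) = ennreal (c1 e) * ennreal D + ennreal (c2 e) * ennreal IAr"
          using c1_0[OF e] c2_0 D0 IAr0 by (simp add: ennreal_plus ennreal_mult)
        then show ?thesis
          using c1_0[OF e] c2_0 D0 IAr0 by (metis enn2real_ennreal add_nonneg_nonneg mult_nonneg_nonneg)
      qed
      also have "\<dots> = Nc * (e / lam * D + (lam - 1) / lam * e powr (-1/(lam-1)) * T)"
        unfolding c1_def c2_def T_def by (simp add: algebra_simps)
      finally show ?thesis .
    qed
    have opt: "J1 powr lam \<le> Nc powr lam * T powr (lam - 1) * D \<and> T > 0"
      by (rule opt_eps[OF lam J1p D0 T0 Nc0 key])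
    have Tp: "T > 0" using opt by simp
    have K1p: "K1 > 0" unfolding K1_def using K0 r12 by simp
    have IArp: "IAr > 0"
    proof (rule ccontr)
      assume "\<not> IAr > 0" then have "IAr = 0" using IAr0 by simp
      then show False using Tp unfolding T_def by simp
    qed
    have Tpow: "T powr (lam - 1) = K1 powr lam * IAr powr (lam - 1)"
    proof -
      have "T powr (lam - 1) = (K1 powr q) powr (lam - 1) * IAr powr (lam - 1)"
        unfolding T_def using K1p IArp by (simp add: powr_mult)
      also have "(K1 powr q) powr (lam - 1) = K1 powr lam"
        unfolding q_def using lam by (simp add: powr_powr)
      finally show ?thesis .
    qed
    have JI: "J1 powr lam * IAr powr (1 - lam) \<le> Nc powr lam * K1 powr lam * D"
    proof -
      have "J1 powr lam * IAr powr (1 - lam) \<le> (Nc powr lam * K1 powr lam * IAr powr (lam - 1) * D) * IAr powr (1 - lam)"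
        using opt Tpow by (intro mult_right_mono) (auto simp: mult_ac)
      also have "\<dots> = Nc powr lam * K1 powr lam * D * (IAr powr (lam - 1) * IAr powr (1 - lam))"
        by (simp add: mult_ac)
      also have "IAr powr (lam - 1) * IAr powr (1 - lam) = 1"
        using IArp by (simp add: powr_add[symmetric])
      finally show ?thesis by simp
    qed
    define Irr where "Irr = enn2real Ir"
    have IArIrr: "IAr \<le> Irr" unfolding IAr_def Irr_def by (rule enn2real_mono[OF IAIr]) (use Irf in simp)
    have hval: "h_fun lam \<sigma> a b r = (Irr / r ^ CARD('n)) powr (1 - lam)"
      unfolding hdef Irr_def using Irf by simp
    have rp: "r > 0" using rr r12 by simp
    have hle: "h_fun lam \<sigma> a b r \<le> IAr powr (1 - lam) * r powr (n * (lam - 1))"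
    proof -
      have "(Irr / r ^ CARD('n)) powr (1 - lam) \<le> (IAr / r ^ CARD('n)) powr (1 - lam)"
        by (rule powr_mono2') (use lam IArp IArIrr rp in \<open>auto intro: divide_right_mono\<close>)
      also have "\<dots> = IAr powr (1 - lam) / (r ^ CARD('n)) powr (1 - lam)"
        using IArp rp by (simp add: powr_divide)
      also have "(r ^ CARD('n)) powr (1 - lam) = r powr (n * (1 - lam))"
        unfolding n_def using rp by (simp add: powr_realpow[symmetric] powr_powr)
      also have "IAr powr (1 - lam) / r powr (n * (1 - lam)) = IAr powr (1 - lam) * r powr (n * (lam - 1))"
      proof -
        have "r powr (n * (lam - 1)) = inverse (r powr (n * (1 - lam)))"
          by (simp add: powr_minus[symmetric] algebra_simps)
        then show ?thesis by (simp add: divide_inverse)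
      qed
      finally show ?thesis unfolding hval .
    qed
    have rle: "r powr (n * (lam - 1)) \<le> sqrt \<sigma> powr (n * (lam - 1)) * r1 powr (n * (lam - 1))"
    proof -
      have rs: "r \<le> sqrt \<sigma> * r1" using rr r12 by simp
      have "r powr (n * (lam - 1)) \<le> (sqrt \<sigma> * r1) powr (n * (lam - 1))"
        by (intro powr_mono2) (use rs rp lam in \<open>auto simp: n_def\<close>)
      also have "\<dots> = sqrt \<sigma> powr (n * (lam - 1)) * r1 powr (n * (lam - 1))"
        using r12 sig by (simp add: powr_mult)
      finally show ?thesis .
    qed
    have Rc: "r1 powr ((1 - lam) * n) * r1 powr (n * (lam - 1)) = 1"
      using r12 by (simp add: powr_add[symmetric] algebra_simps)
    have PK: "(r2 - r1) powr (lam * m) * K1 powr lam = K0 powr lam"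
    proof -
      have "K1 powr lam = K0 powr lam / ((r2 - r1) ^ m) powr lam"
        unfolding K1_def using K0 r12 by (simp add: powr_divide)
      also have "((r2 - r1) ^ m) powr lam = (r2 - r1) powr (lam * m)"
        using r12 by (simp add: powr_realpow[symmetric] powr_powr mult.commute)
      finally show ?thesis using r12 by simp
    qed
    have Ncle: "Nc powr lam * K0 powr lam \<le> ((Nc + 1) * K0) powr lam"
    proof -
      have "Nc powr lam * K0 powr lam = (Nc * K0) powr lam" using Nc0 K0 by (simp add: powr_mult)
      also have "\<dots> \<le> ((Nc + 1) * K0) powr lam"
        by (rule powr_mono2) (use Nc0 K0 lam in auto)
      finally show ?thesis .
    qed
    define P where "P = (r2 - r1) powr (lam * m)"
    define R where "R = r1 powr ((1 - lam) * n)"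
    define Sg where "Sg = sqrt \<sigma> powr (n * (lam - 1))"
    have P0: "P \<ge> 0" and R0: "R \<ge> 0" and Sg0: "Sg \<ge> 0" unfolding P_def R_def Sg_def by auto
    have "P * R * h_fun lam \<sigma> a b r * J1 powr lam \<le> P * R * (IAr powr (1 - lam) * r powr (n * (lam - 1))) * J1 powr lam"
      using P0 R0 hle by (intro mult_right_mono mult_left_mono) auto
    also have "\<dots> \<le> P * R * (IAr powr (1 - lam) * (Sg * r1 powr (n * (lam - 1)))) * J1 powr lam"
      unfolding Sg_def using P0 R0 rle by (intro mult_right_mono mult_left_mono) auto
    also have "\<dots> = Sg * (P * (J1 powr lam * IAr powr (1 - lam))) * (R * r1 powr (n * (lam - 1)))"
      by (simp add: mult_ac)
    also have "R * r1 powr (n * (lam - 1)) = 1" unfolding R_def by (rule Rc)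
    also have "Sg * (P * (J1 powr lam * IAr powr (1 - lam))) * 1 \<le> Sg * (P * (Nc powr lam * K1 powr lam * D))"
      using JI P0 Sg0 by (simp add: mult_left_mono)
    also have "\<dots> = Sg * (Nc powr lam * K0 powr lam) * D"
      using PK unfolding P_def by (simp add: mult_ac)
    also have "\<dots> \<le> Sg * ((Nc + 1) * K0) powr lam * D"
      using Ncle Sg0 D0 by (intro mult_right_mono mult_left_mono) auto
    finally have fin: "P * R * h_fun lam \<sigma> a b r * J1 powr lam \<le> ((Nc + 1) * K0) powr lam * Sg * D"
      by (simp add: mult_ac)
    show ?thesis
      using fin unfolding P_def R_def Sg_def n_def D_def J1_def J2_def by (simp add: mult_ac)
  qed
qed

lemma J_mono:
  fixes b u :: "real^'n::finite \<Rightarrow> real"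
  assumes sol: "is_solution m lam aa b u" and bpos: "\<forall>x. b x > 0" and r: "0 < r1" "r1 < r2"
  shows "J_fun lam b u r1 \<le> J_fun lam b u r2"
proof -
  define f where "f = (\<lambda>x. b x * \<bar>u x\<bar> powr lam)"
  have f0: "f x \<ge> 0" for x unfolding f_def using bpos by (simp add: less_imp_le)
  have loc: "loc_integrable f" using sol unfolding is_solution_def f_def by simp
  have ic: "set_integrable lborel (cball 0 r2) f" using loc unfolding loc_integrable_def by simp
  have ib1: "set_integrable lborel (ball 0 r1) f" by (rule set_integrable_subset[OF ic]) (use r in auto)
  have ib2: "set_integrable lborel (ball 0 r2) f" by (rule set_integrable_subset[OF ic]) auto
  show ?thesis
    unfolding J_fun_def set_lebesgue_integral_def f_def[symmetric]
  proof (rule integral_mono)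
    show "integrable lborel (\<lambda>x. indicat_real (ball 0 r1) x *\<^sub>R f x)" using ib1 unfolding set_integrable_def .
    show "integrable lborel (\<lambda>x. indicat_real (ball 0 r2) x *\<^sub>R f x)" using ib2 unfolding set_integrable_def .
    fix x show "indicat_real (ball 0 r1) x *\<^sub>R f x \<le> indicat_real (ball 0 r2) x *\<^sub>R f x"
      using f0[of x] r by (auto simp: indicator_def)
  qed
qed

theorem lemma3p1:
  fixes m :: nat and lam \<sigma> :: real
  assumes "m \<ge> 1" and "lam > 1" and "\<sigma> > 1"
  shows "\<exists>C>0. \<forall>(aa :: ('n::finite \<Rightarrow> nat) \<Rightarrow> real^'n \<Rightarrow> real \<Rightarrow> real)
            (a :: real^'n \<Rightarrow> real) (b :: real^'n \<Rightarrow> real) (u :: real^'n \<Rightarrow> real) r1 r2.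
     a \<in> borel_measurable lborel \<and> (\<forall>x. a x > 0) \<and>
     b \<in> borel_measurable lborel \<and> (\<forall>x. b x > 0) \<and>
     (\<forall>\<alpha>. mi_order \<alpha> = m \<longrightarrow> (AE x in lborel. \<forall>\<zeta>. \<bar>aa \<alpha> x \<zeta>\<bar> \<le> a x * \<bar>\<zeta>\<bar>)) \<and>
     is_solution m lam aa b u \<and>
     0 < r1 \<and> r1 < r2 \<and> r2 \<le> sqrt \<sigma> * r1
     \<longrightarrow> J_fun lam b u r2 - J_fun lam b u r1 \<ge>
         C * (r2 - r1) powr (lam * m) * r1 powr ((1 - lam) * CARD('n))
           * (SUP r\<in>{r1<..<r2}. h_fun lam \<sigma> a b r) * (J_fun lam b u r1) powr lam"
proof -
  note m1 = assms(1) and lam = assms(2) and sig = assms(3)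
  define N where "N = nat \<lceil>real m * lam / (lam - 1)\<rceil>"
  have NR: "real N \<ge> real m * lam / (lam - 1)" unfolding N_def by linarith
  have mle: "real m \<le> real m * lam / (lam - 1)" using lam by (simp add: field_simps)
  have Nm: "N \<ge> m" using NR mle by linarith
  have Nlam: "real N - real m \<ge> real N / lam"
  proof -
    have "real m \<le> real N * (lam - 1) / lam" using NR lam by (simp add: field_simps)
    then show ?thesis using lam by (simp add: field_simps)
  qed
  have N0: "N > 0" using Nm m1 by simp
  obtain K0 where K0: "K0 > 0" and Kb: "\<forall>(is::'n list) r1 r2 x. length is = m \<longrightarrow> 0 < r1 \<longrightarrow> r1 < r2 \<longrightarrow> r2 \<le> sqrt \<sigma> * r1 \<longrightarrow>
     \<bar>iter_partial is (phi N (r1\<^sup>2 / (r2\<^sup>2 - r1\<^sup>2)) (1 / r1)) x\<bar>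
        \<le> K0 / (r2 - r1) ^ m * phi N (r1\<^sup>2 / (r2\<^sup>2 - r1\<^sup>2)) (1 / r1) x powr (1 / lam)
     \<and> (norm x < r1 \<longrightarrow> iter_partial is (phi N (r1\<^sup>2 / (r2\<^sup>2 - r1\<^sup>2)) (1 / r1)) x = 0)"
    using phi_deriv_bound[OF m1 lam sig Nm Nlam] by blast
  define Nc where "Nc = real (card {\<alpha>::'n \<Rightarrow> nat. mi_order \<alpha> = m})"
  define M where "M = ((Nc + 1) * K0) powr lam * sqrt \<sigma> powr (real CARD('n) * (lam - 1))"
  have Mp: "M > 0" unfolding M_def Nc_def using K0 sig by simp
  define C where "C = 1 / M"
  have Cp: "C > 0" unfolding C_def using Mp by simp
  show ?thesis
  proof (intro exI[of _ C] conjI allI impI Cp)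
    fix aa :: "('n \<Rightarrow> nat) \<Rightarrow> real^'n \<Rightarrow> real \<Rightarrow> real" and a b u :: "real^'n \<Rightarrow> real" and r1 r2 :: real
    assume H: "a \<in> borel_measurable lborel \<and> (\<forall>x. a x > 0) \<and>
     b \<in> borel_measurable lborel \<and> (\<forall>x. b x > 0) \<and>
     (\<forall>\<alpha>. mi_order \<alpha> = m \<longrightarrow> (AE x in lborel. \<forall>\<zeta>. \<bar>aa \<alpha> x \<zeta>\<bar> \<le> a x * \<bar>\<zeta>\<bar>)) \<and>
     is_solution m lam aa b u \<and>
     0 < r1 \<and> r1 < r2 \<and> r2 \<le> sqrt \<sigma> * r1"
    then have am: "a \<in> borel_measurable lborel" and apos: "\<forall>x. a x > 0"
      and bm: "b \<in> borel_measurable lborel" and bpos: "\<forall>x. b x > 0"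
      and ab: "\<forall>\<alpha>. mi_order \<alpha> = m \<longrightarrow> (AE x in lborel. \<forall>\<zeta>. \<bar>aa \<alpha> x \<zeta>\<bar> \<le> a x * \<bar>\<zeta>\<bar>)"
      and sol: "is_solution m lam aa b u"
      and r12: "0 < r1" "r1 < r2" "r2 \<le> sqrt \<sigma> * r1" by auto
    define D where "D = J_fun lam b u r2 - J_fun lam b u r1"
    have D0: "D \<ge> 0" unfolding D_def using J_mono[OF sol bpos r12(1,2)] by simp
    define Y where "Y = C * (r2 - r1) powr (lam * m) * r1 powr ((1 - lam) * CARD('n)) * (J_fun lam b u r1) powr lam"
    have Y0: "Y \<ge> 0" unfolding Y_def using Cp by simp
    have each: "Y * h_fun lam \<sigma> a b r \<le> D" if "r \<in> {r1<..<r2}" for r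
    proof -
      have rr: "r1 < r" "r < r2" using that by auto
      have ib: "M * D \<ge> (r2 - r1) powr (lam * m) * r1 powr ((1 - lam) * CARD('n)) * h_fun lam \<sigma> a b r * (J_fun lam b u r1) powr lam"
        unfolding M_def Nc_def D_def
        by (rule instance_bound[OF m1 lam sig N0 K0 Kb am apos bm bpos ab sol r12 rr])
      have "Y * h_fun lam \<sigma> a b r = C * ((r2 - r1) powr (lam * m) * r1 powr ((1 - lam) * CARD('n)) * h_fun lam \<sigma> a b r * (J_fun lam b u r1) powr lam)"
        unfolding Y_def by (simp add: mult_ac)
      also have "\<dots> \<le> C * (M * D)" using ib Cp by (intro mult_left_mono) auto
      also have "\<dots> = D" unfolding C_def using Mp by simp
      finally show ?thesis .
    qed
    have "Y * (SUP r\<in>{r1<..<r2}. h_fun lam \<sigma> a b r) \<le> D"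
    proof (cases "Y = 0")
      case True then show ?thesis using D0 by simp
    next
      case False
      then have Yp: "Y > 0" using Y0 by simp
      have "(SUP r\<in>{r1<..<r2}. h_fun lam \<sigma> a b r) \<le> D / Y"
      proof (rule cSUP_least)
        show "{r1<..<r2} \<noteq> {}" using r12 by simp
        fix r assume "r \<in> {r1<..<r2}"
        then show "h_fun lam \<sigma> a b r \<le> D / Y" using each Yp by (simp add: field_simps mult.commute)
      qed
      then have "Y * (SUP r\<in>{r1<..<r2}. h_fun lam \<sigma> a b r) \<le> Y * (D / Y)" using Yp by (intro mult_left_mono) auto
      then show ?thesis using Yp by simp
    qed
    then show "J_fun lam b u r2 - J_fun lam b u r1 \<ge>
         C * (r2 - r1) powr (lam * m) * r1 powr ((1 - lam) * CARD('n))
           * (SUP r\<in>{r1<..<r2}. h_fun lam \<sigma> a b r) * (J_fun lam b u r1) powr lam"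
      unfolding Y_def D_def by (simp add: mult_ac)
  qed
qed

end
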